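(* Let $k\in\mathbb{N}_0\cup\{\infty\}$, let $E,F$ be locally convex super vector spaces, $\mathcal{U}\subseteq\overline{E}^{(k)}$ an open subfunctor and $f\colon\mathcal{U}\to\overline{F}^{(k)}$ a natural transformation such that each $f_\Lambda$ is smooth. For $\Lambda\in\mathbf{Gr}^{(k)}$, $x\in\mathcal{U}_{\mathbb{R}}$, $n_0\in E_0\otimes\Lambda^+_{\bar 0}$ and $n_1\in E_1\otimes\Lambda_{\bar1}$, we have $x+n_0+n_1\in\mathcal{U}_\Lambda$ and $$f_\Lambda(x+n_0+n_1)=\sum_{m,l=0}^\infty\frac{1}{m!\,l!}d^{m+l}f_\Lambda(x)(\underbrace{n_0,\dots,n_0}_{m},\underbrace{n_1,\dots,n_1}_{l})=\sum_{i=0}^\infty\frac1{i!}d^if_\Lambda(x)(n_0+n_1,\dots,n_0+n_1),$$ where the sums have only finitely many nonzero terms.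
   Context: Grassmann algebras $\Lambda_n=\mathbb{R}[\lambda_1..\lambda_n]$ with anticommuting generators; $\Lambda_{\bar0}$, $\Lambda_{\bar1}$ spanned by the monomials $\lambda_I$ with $|I|$ even resp. odd; $\Lambda^+$ is the ideal spanned by $\lambda_I$, $I\neq\emptyset$, and $\Lambda^+_{\bar0}=\Lambda^+\cap\Lambda_{\bar0}$. $\mathbf{Gr}^{(k)}$: category of $\Lambda_0,\dots,\Lambda_k$ with parity-preserving unital homomorphisms. For a locally convex super vector space $E=E_0\oplus E_1$: $\overline{E}^{(k)}_\Lambda=(E_0\otimes\Lambda_{\bar0})\oplus(E_1\otimes\Lambda_{\bar1})$ (product topology), functorial via $\mathrm{id}\otimes\varrho$, with $\overline{E}_{\mathbb{R}}=E_0\subseteq\overline{E}_\Lambda$. An open subfunctor $\mathcal{U}$: open sets $\mathcal{U}_\Lambda\subseteq\overline{E}^{(k)}_\Lambda$ stable under all $\overline{E}^{(k)}_\varrho$. Smoothness in the sense of Bastiani. *)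

theory Defs
  imports Complex_Main "HOL-Library.Extended_Nat"
begin

definition seminorm_on :: "('a::real_vector \<Rightarrow> real) \<Rightarrow> bool" where
  "seminorm_on p \<longleftrightarrow> (\<forall>x. 0 \<le> p x) \<and> (\<forall>x y. p (x + y) \<le> p x + p y)
     \<and> (\<forall>c x. p (c *\<^sub>R x) = \<bar>c\<bar> * p x)"

definition lc_space :: "('a::real_vector \<Rightarrow> real) set \<Rightarrow> bool" where
  "lc_space S \<longleftrightarrow> (\<forall>p\<in>S. seminorm_on p) \<and> (\<forall>x. (\<forall>p\<in>S. p x = 0) \<longrightarrow> x = 0)"

section \<open>Grassmann algebras Lambda_n (generators indexed 0..n-1)\<close>

type_synonym grass = "nat set \<Rightarrow> real"

definition grass :: "nat \<Rightarrow> grass set" where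
  "grass n = {a. \<forall>I. a I \<noteq> 0 \<longrightarrow> I \<subseteq> {..<n}}"

definition gbasis :: "nat set \<Rightarrow> grass" where
  "gbasis I = (\<lambda>K. if K = I then 1 else 0)"

definition gsign :: "nat set \<Rightarrow> nat set \<Rightarrow> real" where
  "gsign I J = (-1) ^ card {(i, j). i \<in> I \<and> j \<in> J \<and> j < i}"

definition gmult :: "grass \<Rightarrow> grass \<Rightarrow> grass" where
  "gmult a b = (\<lambda>K. \<Sum>I\<in>Pow K. gsign I (K - I) * a I * b (K - I))"

definition gr_even :: "nat \<Rightarrow> grass set" where
  "gr_even n = {a \<in> grass n. \<forall>I. a I \<noteq> 0 \<longrightarrow> even (card I)}"

definition gr_odd :: "nat \<Rightarrow> grass set" where
  "gr_odd n = {a \<in> grass n. \<forall>I. a I \<noteq> 0 \<longrightarrow> odd (card I)}"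

definition gr_hom :: "nat \<Rightarrow> nat \<Rightarrow> (grass \<Rightarrow> grass) \<Rightarrow> bool" where
  "gr_hom n m \<rho> \<longleftrightarrow>
     (\<forall>a\<in>grass n. \<rho> a \<in> grass m)
   \<and> (\<forall>a\<in>grass n. \<forall>b\<in>grass n. \<rho> (\<lambda>I. a I + b I) = (\<lambda>I. \<rho> a I + \<rho> b I))
   \<and> (\<forall>c. \<forall>a\<in>grass n. \<rho> (\<lambda>I. c * a I) = (\<lambda>I. c * \<rho> a I))
   \<and> \<rho> (gbasis {}) = gbasis {}
   \<and> (\<forall>a\<in>grass n. \<forall>b\<in>grass n. \<rho> (gmult a b) = gmult (\<rho> a) (\<rho> b))
   \<and> \<rho> ` gr_even n \<subseteq> gr_even m
   \<and> \<rho> ` gr_odd n \<subseteq> gr_odd m"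

section \<open>The functor bar E: (E_0 tensor Lambda_even) + (E_1 tensor Lambda_odd)\<close>

text \<open>An element of E tensor Lambda_n is represented by its coefficient functions
  I \<mapsto> e_I (I a subset of {0..<n}); E = E_0 \<oplus> E_1 with E_0, E_1 given as types.\<close>
type_synonym ('a, 'b) sv = "(nat set \<Rightarrow> 'a) \<times> (nat set \<Rightarrow> 'b)"

definition sv_add :: "('a::real_vector, 'b::real_vector) sv \<Rightarrow> ('a, 'b) sv \<Rightarrow> ('a, 'b) sv" where
  "sv_add x y = (\<lambda>I. fst x I + fst y I, \<lambda>I. snd x I + snd y I)"

definition sv_diff :: "('a::real_vector, 'b::real_vector) sv \<Rightarrow> ('a, 'b) sv \<Rightarrow> ('a, 'b) sv" where
  "sv_diff x y = (\<lambda>I. fst x I - fst y I, \<lambda>I. snd x I - snd y I)"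

definition sv_scale :: "real \<Rightarrow> ('a::real_vector, 'b::real_vector) sv \<Rightarrow> ('a, 'b) sv" where
  "sv_scale c x = (\<lambda>I. c *\<^sub>R fst x I, \<lambda>I. c *\<^sub>R snd x I)"

definition sv_zero :: "('a::real_vector, 'b::real_vector) sv" where
  "sv_zero = (\<lambda>I. 0, \<lambda>I. 0)"

definition sv_sum :: "('i \<Rightarrow> ('a::real_vector, 'b::real_vector) sv) \<Rightarrow> 'i set \<Rightarrow> ('a, 'b) sv" where
  "sv_sum g A = (\<lambda>I. \<Sum>i\<in>A. fst (g i) I, \<lambda>I. \<Sum>i\<in>A. snd (g i) I)"

definition bar_space :: "nat \<Rightarrow> ('a::real_vector, 'b::real_vector) sv set" where
  "bar_space n = {x. (\<forall>I. fst x I \<noteq> 0 \<longrightarrow> I \<subseteq> {..<n} \<and> even (card I))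
                   \<and> (\<forall>I. snd x I \<noteq> 0 \<longrightarrow> I \<subseteq> {..<n} \<and> odd (card I))}"

text \<open>E_0 tensor Lambda^+_even and E_1 tensor Lambda_odd inside bar E_Lambda_n.\<close>
definition even_plus_part :: "nat \<Rightarrow> ('a::real_vector, 'b::real_vector) sv set" where
  "even_plus_part n = {x \<in> bar_space n. fst x {} = 0 \<and> snd x = (\<lambda>I. 0)}"

definition odd_part :: "nat \<Rightarrow> ('a::real_vector, 'b::real_vector) sv set" where
  "odd_part n = {x \<in> bar_space n. fst x = (\<lambda>I. 0)}"

definition bar_map :: "nat \<Rightarrow> (grass \<Rightarrow> grass) \<Rightarrow> ('a::real_vector, 'b::real_vector) sv \<Rightarrow> ('a, 'b) sv" where
  "bar_map n \<rho> x = (\<lambda>J. \<Sum>I\<in>Pow {..<n}. \<rho> (gbasis I) J *\<^sub>R fst x I,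
                    \<lambda>J. \<Sum>I\<in>Pow {..<n}. \<rho> (gbasis I) J *\<^sub>R snd x I)"

text \<open>Product topology on bar E_Lambda, given by the seminorms x \<mapsto> p(x_I).\<close>
definition sv_seminorms :: "('a::real_vector \<Rightarrow> real) set \<Rightarrow> ('b::real_vector \<Rightarrow> real) set
    \<Rightarrow> (('a, 'b) sv \<Rightarrow> real) set" where
  "sv_seminorms SA SB = {(\<lambda>x. p (fst x I)) | p I. p \<in> SA} \<union> {(\<lambda>x. q (snd x I)) | q I. q \<in> SB}"

definition sv_open :: "('a::real_vector \<Rightarrow> real) set \<Rightarrow> ('b::real_vector \<Rightarrow> real) set \<Rightarrow> nat
    \<Rightarrow> ('a, 'b) sv set \<Rightarrow> bool" where
  "sv_open SA SB n U \<longleftrightarrow> U \<subseteq> bar_space n \<and>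
     (\<forall>x\<in>U. \<exists>P \<epsilon>. finite P \<and> P \<subseteq> sv_seminorms SA SB \<and> \<epsilon> > 0 \<and>
        {y \<in> bar_space n. \<forall>p\<in>P. p (sv_diff y x) < \<epsilon>} \<subseteq> U)"

definition sv_lim0 :: "('a::real_vector \<Rightarrow> real) set \<Rightarrow> ('b::real_vector \<Rightarrow> real) set
    \<Rightarrow> (real \<Rightarrow> ('a, 'b) sv) \<Rightarrow> ('a, 'b) sv \<Rightarrow> bool" where
  "sv_lim0 SC SD g w \<longleftrightarrow> (\<forall>q\<in>sv_seminorms SC SD. \<forall>\<epsilon>>0. \<exists>\<delta>>0. \<forall>t.
       t \<noteq> 0 \<and> \<bar>t\<bar> < \<delta> \<longrightarrow> q (sv_diff (g t) w) < \<epsilon>)"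

definition diff_quot :: "(('a::real_vector, 'b::real_vector) sv \<Rightarrow> ('c::real_vector, 'd::real_vector) sv)
    \<Rightarrow> ('a, 'b) sv \<Rightarrow> ('a, 'b) sv \<Rightarrow> real \<Rightarrow> ('c, 'd) sv" where
  "diff_quot f x h t = sv_scale (1 / t) (sv_diff (f (sv_add x (sv_scale t h))) (f x))"

definition dir_deriv :: "('c::real_vector \<Rightarrow> real) set \<Rightarrow> ('d::real_vector \<Rightarrow> real) set
    \<Rightarrow> (('a::real_vector, 'b::real_vector) sv \<Rightarrow> ('c, 'd) sv) \<Rightarrow> ('a, 'b) sv \<Rightarrow> ('a, 'b) sv \<Rightarrow> ('c, 'd) sv" where
  "dir_deriv SC SD f x h = (THE w. sv_lim0 SC SD (diff_quot f x h) w)"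

primrec diff_iter :: "('c::real_vector \<Rightarrow> real) set \<Rightarrow> ('d::real_vector \<Rightarrow> real) set
    \<Rightarrow> (('a::real_vector, 'b::real_vector) sv \<Rightarrow> ('c, 'd) sv) \<Rightarrow> ('a, 'b) sv \<Rightarrow> ('a, 'b) sv list \<Rightarrow> ('c, 'd) sv" where
  "diff_iter SC SD f x [] = f x"
| "diff_iter SC SD f x (h # hs) = dir_deriv SC SD (\<lambda>y. diff_iter SC SD f y hs) x h"

text \<open>Continuity of a map on U \<times> (bar E_n)^k, arguments given as list x # hs.\<close>
definition sv_cont_lists :: "('a::real_vector \<Rightarrow> real) set \<Rightarrow> ('b::real_vector \<Rightarrow> real) set
    \<Rightarrow> ('c::real_vector \<Rightarrow> real) set \<Rightarrow> ('d::real_vector \<Rightarrow> real) set \<Rightarrow> nat \<Rightarrow> ('a, 'b) sv set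
    \<Rightarrow> nat \<Rightarrow> (('a, 'b) sv list \<Rightarrow> ('c, 'd) sv) \<Rightarrow> bool" where
  "sv_cont_lists SA SB SC SD n U k g \<longleftrightarrow>
     (\<forall>xs. length xs = Suc k \<and> hd xs \<in> U \<and> set xs \<subseteq> bar_space n \<longrightarrow>
       (\<forall>q\<in>sv_seminorms SC SD. \<forall>\<epsilon>>0. \<exists>P \<delta>. finite P \<and> P \<subseteq> sv_seminorms SA SB \<and> \<delta> > 0 \<and>
          (\<forall>ys. length ys = Suc k \<and> hd ys \<in> U \<and> set ys \<subseteq> bar_space n \<and>
                (\<forall>i<Suc k. \<forall>p\<in>P. p (sv_diff (ys ! i) (xs ! i)) < \<delta>)
                \<longrightarrow> q (sv_diff (g ys) (g xs)) < \<epsilon>)))"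

definition bastiani_smooth :: "('a::real_vector \<Rightarrow> real) set \<Rightarrow> ('b::real_vector \<Rightarrow> real) set
    \<Rightarrow> ('c::real_vector \<Rightarrow> real) set \<Rightarrow> ('d::real_vector \<Rightarrow> real) set \<Rightarrow> nat \<Rightarrow> ('a, 'b) sv set
    \<Rightarrow> (('a, 'b) sv \<Rightarrow> ('c, 'd) sv) \<Rightarrow> bool" where
  "bastiani_smooth SA SB SC SD n U f \<longleftrightarrow>
     sv_open SA SB n U
   \<and> (\<forall>x\<in>U. f x \<in> bar_space n)
   \<and> (\<forall>x\<in>U. \<forall>h hs. set (h # hs) \<subseteq> bar_space n \<longrightarrow>
        (\<exists>w. sv_lim0 SC SD (diff_quot (\<lambda>y. diff_iter SC SD f y hs) x h) w))
   \<and> (\<forall>k. sv_cont_lists SA SB SC SD n U k (\<lambda>ys. diff_iter SC SD f (hd ys) (tl ys)))"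

definition open_subfunctor :: "enat \<Rightarrow> ('a::real_vector \<Rightarrow> real) set \<Rightarrow> ('b::real_vector \<Rightarrow> real) set
    \<Rightarrow> (nat \<Rightarrow> ('a, 'b) sv set) \<Rightarrow> bool" where
  "open_subfunctor k SA SB U \<longleftrightarrow>
     (\<forall>n. enat n \<le> k \<longrightarrow> sv_open SA SB n (U n))
   \<and> (\<forall>n m \<rho>. enat n \<le> k \<and> enat m \<le> k \<and> gr_hom n m \<rho> \<longrightarrow> bar_map n \<rho> ` U n \<subseteq> U m)"

definition nat_transf :: "enat \<Rightarrow> (nat \<Rightarrow> ('a::real_vector, 'b::real_vector) sv set)
    \<Rightarrow> (nat \<Rightarrow> ('a, 'b) sv \<Rightarrow> ('c::real_vector, 'd::real_vector) sv) \<Rightarrow> bool" where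
  "nat_transf k U f \<longleftrightarrow>
     (\<forall>n. enat n \<le> k \<longrightarrow> (\<forall>x\<in>U n. f n x \<in> bar_space n))
   \<and> (\<forall>n m \<rho> x. enat n \<le> k \<and> enat m \<le> k \<and> gr_hom n m \<rho> \<and> x \<in> U n
        \<longrightarrow> bar_map n \<rho> (f n x) = f m (bar_map n \<rho> x))"

end

theory Submission
  imports Defs
begin

section \<open>Seminorm basics\<close>

lemma sn_zero: "seminorm_on p \<Longrightarrow> p 0 = 0"
  unfolding seminorm_on_def by (metis abs_0 mult_zero_left scaleR_zero_left)

lemma sn_neg: "seminorm_on p \<Longrightarrow> p (- x) = p x"
  unfolding seminorm_on_def by (metis abs_minus_cancel abs_one mult_1 scaleR_minus1_left)

lemma sn_nonneg: "seminorm_on p \<Longrightarrow> 0 \<le> p x"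
  unfolding seminorm_on_def by auto

lemma sn_add: "seminorm_on p \<Longrightarrow> p (x + y) \<le> p x + p y"
  unfolding seminorm_on_def by auto

lemma sn_scale: "seminorm_on p \<Longrightarrow> p (c *\<^sub>R x) = \<bar>c\<bar> * p x"
  unfolding seminorm_on_def by auto

lemma sn_diff_tri: "seminorm_on p \<Longrightarrow> p (x - z) \<le> p (x - y) + p (y - z)"
  by (metis sn_add diff_add_cancel add_diff_eq)

lemma sn_diff_sym: "seminorm_on p \<Longrightarrow> p (x - y) = p (y - x)"
  by (metis minus_diff_eq sn_neg)

lemma sn_rev_tri: "seminorm_on p \<Longrightarrow> \<bar>p x - p y\<bar> \<le> p (x - y)"
proof -
  assume p: "seminorm_on p"
  have "p x \<le> p (x - y) + p y" using sn_add[OF p, of "x - y" y] by simp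
  moreover have "p y \<le> p (y - x) + p x" using sn_add[OF p, of "y - x" x] by simp
  ultimately show ?thesis using sn_diff_sym[OF p, of x y] by linarith
qed

lemma sn_sum: assumes sp: "seminorm_on p" and fA: "finite A"
  shows "p (\<Sum>j\<in>A. c j *\<^sub>R a j) \<le> (\<Sum>j\<in>A. \<bar>c j\<bar> * p (a j))"
  using fA
proof (induction A rule: finite_induct)
  case empty then show ?case by (simp add: sn_zero[OF sp])
next
  case (insert x F)
  then show ?case using sn_add[OF sp, of "c x *\<^sub>R a x" "\<Sum>j\<in>F. c j *\<^sub>R a j"]
    by (simp add: sn_scale[OF sp])
qed

lemma lc_sn: "lc_space S \<Longrightarrow> p \<in> S \<Longrightarrow> seminorm_on p"
  unfolding lc_space_def by auto

lemma lc_sep: "lc_space S \<Longrightarrow> (\<And>p. p \<in> S \<Longrightarrow> p x = 0) \<Longrightarrow> x = 0"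
  unfolding lc_space_def by auto

section \<open>Vector curves with seminorm derivative\<close>

definition vderiv :: "('v::real_vector \<Rightarrow> real) set \<Rightarrow> (real \<Rightarrow> 'v) \<Rightarrow> (real \<Rightarrow> 'v) \<Rightarrow> bool" where
  "vderiv S g g' \<longleftrightarrow> (\<forall>t. \<forall>p\<in>S. \<forall>\<epsilon>>0. \<exists>\<delta>>0. \<forall>\<tau>. \<tau> \<noteq> 0 \<and> \<bar>\<tau>\<bar> < \<delta> \<longrightarrow>
      p ((1/\<tau>) *\<^sub>R (g (t + \<tau>) - g t) - g' t) < \<epsilon>)"

lemma vderiv_by_bound:
  assumes "\<And>t p. p \<in> S \<Longrightarrow> \<exists>e. (e \<midarrow>0\<rightarrow> 0) \<and> (\<forall>\<tau>. \<tau> \<noteq> 0 \<longrightarrow> p ((1/\<tau>) *\<^sub>R (g (t + \<tau>) - g t) - g' t) \<le> e \<tau>)"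
  shows "vderiv S g g'"
  unfolding vderiv_def
proof (intro allI ballI impI)
  fix t p and \<epsilon> :: real assume p: "p \<in> S" and e: "\<epsilon> > 0"
  obtain e where e1: "e \<midarrow>0\<rightarrow> 0" and e2: "\<forall>\<tau>. \<tau> \<noteq> 0 \<longrightarrow> p ((1/\<tau>) *\<^sub>R (g (t + \<tau>) - g t) - g' t) \<le> e \<tau>"
    using assms[OF p] by blast
  obtain s where "s > 0" "\<forall>x. x \<noteq> 0 \<and> norm (x - 0) < s \<longrightarrow> norm (e x - 0) < \<epsilon>"
    using LIM_D[OF e1 e] by blast
  then show "\<exists>\<delta>>0. \<forall>\<tau>. \<tau> \<noteq> 0 \<and> \<bar>\<tau>\<bar> < \<delta> \<longrightarrow> p ((1/\<tau>) *\<^sub>R (g (t + \<tau>) - g t) - g' t) < \<epsilon>"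
    using e2 by (intro exI[of _ s]) (auto, fastforce)
qed

lemma vderiv_const:
  assumes S: "lc_space S" and d: "vderiv S g (\<lambda>_. 0)"
  shows "g t = g 0"
proof -
  have "p (g t - g 0) = 0" if p: "p \<in> S" for p
  proof -
    have sp: "seminorm_on p" using lc_sn[OF S p] .
    define \<phi> where "\<phi> u = p (g u - g 0)" for u
    have "DERIV \<phi> u :> 0" for u
      unfolding DERIV_def LIM_eq
    proof (intro allI impI)
      fix r :: real assume r: "r > 0"
      obtain \<delta> where \<delta>: "\<delta> > 0" "\<forall>\<tau>. \<tau> \<noteq> 0 \<and> \<bar>\<tau>\<bar> < \<delta> \<longrightarrow> p ((1/\<tau>) *\<^sub>R (g (u + \<tau>) - g u) - 0) < r"
        using d p r unfolding vderiv_def by blast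
      show "\<exists>s>0. \<forall>x. x \<noteq> 0 \<and> norm (x - 0) < s \<longrightarrow> norm ((\<phi> (u + x) - \<phi> u) / x - 0) < r"
      proof (intro exI[of _ \<delta>] conjI allI impI \<delta>(1))
        fix x :: real assume x: "x \<noteq> 0 \<and> norm (x - 0) < \<delta>"
        have "\<bar>\<phi> (u + x) - \<phi> u\<bar> \<le> p ((g (u + x) - g 0) - (g u - g 0))"
          unfolding \<phi>_def by (rule sn_rev_tri[OF sp])
        also have "\<dots> = p (g (u + x) - g u)" by simp
        also have "\<dots> = \<bar>x\<bar> * p ((1/x) *\<^sub>R (g (u + x) - g u))"
          using x by (simp add: sn_scale[OF sp])
        finally have "\<bar>\<phi> (u + x) - \<phi> u\<bar> \<le> \<bar>x\<bar> * p ((1/x) *\<^sub>R (g (u + x) - g u))" .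
        moreover have "p ((1/x) *\<^sub>R (g (u + x) - g u)) < r" using \<delta>(2) x by auto
        ultimately have "\<bar>\<phi> (u + x) - \<phi> u\<bar> < \<bar>x\<bar> * r"
          using x by (smt (verit) mult_strict_left_mono zero_less_abs_iff)
        then show "norm ((\<phi> (u + x) - \<phi> u) / x - 0) < r"
          using x by (simp add: abs_divide divide_less_eq mult.commute)
      qed
    qed
    then have "\<phi> t = \<phi> 0" by (intro DERIV_isconst_all) auto
    then show ?thesis unfolding \<phi>_def by (simp add: sn_zero[OF sp])
  qed
  then have "g t - g 0 = 0" by (rule lc_sep[OF S])
  then show ?thesis by simp
qed

lemma vderiv_diff:
  assumes S: "\<forall>p\<in>S. seminorm_on p" and g: "vderiv S g g'" and h: "vderiv S h h'"
  shows "vderiv S (\<lambda>t. g t - h t) (\<lambda>t. g' t - h' t)"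
  unfolding vderiv_def
proof (intro allI ballI impI)
  fix t p and \<epsilon> :: real assume p: "p \<in> S" and e: "\<epsilon> > 0"
  have sp: "seminorm_on p" using S p by auto
  obtain d1 where d1: "d1 > 0" "\<forall>\<tau>. \<tau> \<noteq> 0 \<and> \<bar>\<tau>\<bar> < d1 \<longrightarrow> p ((1/\<tau>) *\<^sub>R (g (t + \<tau>) - g t) - g' t) < \<epsilon>/2"
    using g p e unfolding vderiv_def by (meson half_gt_zero)
  obtain d2 where d2: "d2 > 0" "\<forall>\<tau>. \<tau> \<noteq> 0 \<and> \<bar>\<tau>\<bar> < d2 \<longrightarrow> p ((1/\<tau>) *\<^sub>R (h (t + \<tau>) - h t) - h' t) < \<epsilon>/2"
    using h p e unfolding vderiv_def by (meson half_gt_zero)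
  show "\<exists>\<delta>>0. \<forall>\<tau>. \<tau> \<noteq> 0 \<and> \<bar>\<tau>\<bar> < \<delta> \<longrightarrow> p ((1/\<tau>) *\<^sub>R ((g (t + \<tau>) - h (t + \<tau>)) - (g t - h t)) - (g' t - h' t)) < \<epsilon>"
  proof (intro exI[of _ "min d1 d2"] conjI allI impI)
    show "min d1 d2 > 0" using d1 d2 by auto
    fix \<tau> :: real assume \<tau>: "\<tau> \<noteq> 0 \<and> \<bar>\<tau>\<bar> < min d1 d2"
    have eq: "(1/\<tau>) *\<^sub>R ((g (t + \<tau>) - h (t + \<tau>)) - (g t - h t)) - (g' t - h' t)
       = ((1/\<tau>) *\<^sub>R (g (t + \<tau>) - g t) - g' t) + - ((1/\<tau>) *\<^sub>R (h (t + \<tau>) - h t) - h' t)"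
      by (simp add: algebra_simps)
    show "p ((1/\<tau>) *\<^sub>R ((g (t + \<tau>) - h (t + \<tau>)) - (g t - h t)) - (g' t - h' t)) < \<epsilon>"
    proof -
      have a: "p ((1/\<tau>) *\<^sub>R (g (t + \<tau>) - g t) - g' t) < \<epsilon>/2" using d1(2) \<tau> by auto
      have b: "p ((1/\<tau>) *\<^sub>R (h (t + \<tau>) - h t) - h' t) < \<epsilon>/2" using d2(2) \<tau> by auto
      show ?thesis unfolding eq using sn_add[OF sp, of "(1/\<tau>) *\<^sub>R (g (t + \<tau>) - g t) - g' t"
         "- ((1/\<tau>) *\<^sub>R (h (t + \<tau>) - h t) - h' t)"] sn_neg[OF sp, of "(1/\<tau>) *\<^sub>R (h (t + \<tau>) - h t) - h' t"] a b by linarith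
    qed
  qed
qed

lemma vderiv_cong: "vderiv S g g' \<Longrightarrow> (\<And>t. g' t = g'' t) \<Longrightarrow> vderiv S g g''"
  unfolding vderiv_def by simp

lemma vderiv_poly:
  assumes S: "\<forall>p\<in>S. seminorm_on p" and fA: "finite A"
    and d: "\<And>j t. j \<in> A \<Longrightarrow> (\<phi> j has_real_derivative \<phi>' j t) (at t)"
  shows "vderiv S (\<lambda>t. \<Sum>j\<in>A. \<phi> j t *\<^sub>R a j) (\<lambda>t. \<Sum>j\<in>A. \<phi>' j t *\<^sub>R a j)"
proof (rule vderiv_by_bound)
  fix t p assume p: "p \<in> S"
  have sp: "seminorm_on p" using S p by auto
  define e where "e \<tau> = (\<Sum>j\<in>A. \<bar>(\<phi> j (t + \<tau>) - \<phi> j t) / \<tau> - \<phi>' j t\<bar> * p (a j))" for \<tau>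
  have "((\<lambda>\<tau>. \<bar>(\<phi> j (t + \<tau>) - \<phi> j t) / \<tau> - \<phi>' j t\<bar> * p (a j)) \<midarrow>0\<rightarrow> 0)" if j: "j \<in> A" for j
  proof -
    have "(\<lambda>\<tau>. (\<phi> j (t + \<tau>) - \<phi> j t) / \<tau>) \<midarrow>0\<rightarrow> \<phi>' j t" using d[OF j] unfolding DERIV_def .
    then have "(\<lambda>\<tau>. \<bar>(\<phi> j (t + \<tau>) - \<phi> j t) / \<tau> - \<phi>' j t\<bar> * p (a j)) \<midarrow>0\<rightarrow> \<bar>\<phi>' j t - \<phi>' j t\<bar> * p (a j)"
      by (intro tendsto_intros)
    then show ?thesis by simp
  qed
  then have "e \<midarrow>0\<rightarrow> 0" unfolding e_def by (intro tendsto_null_sum) auto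
  moreover have "\<forall>\<tau>. \<tau> \<noteq> 0 \<longrightarrow> p ((1/\<tau>) *\<^sub>R ((\<Sum>j\<in>A. \<phi> j (t + \<tau>) *\<^sub>R a j) - (\<Sum>j\<in>A. \<phi> j t *\<^sub>R a j)) - (\<Sum>j\<in>A. \<phi>' j t *\<^sub>R a j)) \<le> e \<tau>"
  proof (intro allI impI)
    fix \<tau> :: real assume "\<tau> \<noteq> 0"
    have eq: "(1/\<tau>) *\<^sub>R ((\<Sum>j\<in>A. \<phi> j (t + \<tau>) *\<^sub>R a j) - (\<Sum>j\<in>A. \<phi> j t *\<^sub>R a j)) - (\<Sum>j\<in>A. \<phi>' j t *\<^sub>R a j)
        = (\<Sum>j\<in>A. ((\<phi> j (t + \<tau>) - \<phi> j t) / \<tau> - \<phi>' j t) *\<^sub>R a j)"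
      by (simp add: scaleR_sum_right sum_subtractf[symmetric] scaleR_diff_left diff_divide_distrib algebra_simps)
    show "p ((1/\<tau>) *\<^sub>R ((\<Sum>j\<in>A. \<phi> j (t + \<tau>) *\<^sub>R a j) - (\<Sum>j\<in>A. \<phi> j t *\<^sub>R a j)) - (\<Sum>j\<in>A. \<phi>' j t *\<^sub>R a j)) \<le> e \<tau>"
      unfolding eq e_def by (rule sn_sum[OF sp fA])
  qed
  ultimately show "\<exists>e. (e \<midarrow>0\<rightarrow> 0) \<and> (\<forall>\<tau>. \<tau> \<noteq> 0 \<longrightarrow> p ((1/\<tau>) *\<^sub>R ((\<Sum>j\<in>A. \<phi> j (t + \<tau>) *\<^sub>R a j) - (\<Sum>j\<in>A. \<phi> j t *\<^sub>R a j)) - (\<Sum>j\<in>A. \<phi>' j t *\<^sub>R a j)) \<le> e \<tau>)"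
    by blast
qed

lemma vtaylor_gen:
  assumes S: "lc_space S"
  shows "(\<forall>j<N. vderiv S (c j) (c (Suc j))) \<Longrightarrow> (\<forall>t. c N t = 0) \<Longrightarrow>
         c 0 t = (\<Sum>j<N. (t ^ j / fact j) *\<^sub>R c j 0)"
proof (induction N arbitrary: c t)
  case 0 then show ?case by simp
next
  case (Suc N)
  have S': "\<forall>p\<in>S. seminorm_on p" using S lc_sn by blast
  have IH: "c 1 t = (\<Sum>j<N. (t ^ j / fact j) *\<^sub>R c (Suc j) 0)" for t
    using Suc.IH[of "\<lambda>j. c (Suc j)" t] Suc.prems by auto
  have d0: "vderiv S (c 0) (c 1)" using Suc.prems by auto
  have dp: "vderiv S (\<lambda>t. \<Sum>j<Suc N. (t ^ j / fact j) *\<^sub>R c j 0)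
       (\<lambda>t. \<Sum>j<Suc N. (real j * t ^ (j - Suc 0) / fact j) *\<^sub>R c j 0)"
    by (rule vderiv_poly[OF S']) (auto intro!: derivative_eq_intros)
  have "vderiv S (\<lambda>t. c 0 t - (\<Sum>j<Suc N. (t ^ j / fact j) *\<^sub>R c j 0))
       (\<lambda>t. c 1 t - (\<Sum>j<Suc N. (real j * t ^ (j - Suc 0) / fact j) *\<^sub>R c j 0))"
    by (rule vderiv_diff[OF S' d0 dp])
  moreover have "c 1 t - (\<Sum>j<Suc N. (real j * t ^ (j - Suc 0) / fact j) *\<^sub>R c j 0) = 0" for t
  proof -
    have "(\<Sum>j<Suc N. (real j * t ^ (j - Suc 0) / fact j) *\<^sub>R c j 0)
        = (\<Sum>j<N. (real (Suc j) * t ^ j / fact (Suc j)) *\<^sub>R c (Suc j) 0)"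
      by (subst sum.lessThan_Suc_shift) simp
    also have "\<dots> = (\<Sum>j<N. (t ^ j / fact j) *\<^sub>R c (Suc j) 0)"
      by (intro sum.cong refl) (simp add: fact_Suc del: of_nat_Suc)
    finally show ?thesis using IH[of t] by simp
  qed
  ultimately have "vderiv S (\<lambda>t. c 0 t - (\<Sum>j<Suc N. (t ^ j / fact j) *\<^sub>R c j 0)) (\<lambda>_. 0)"
    by (rule vderiv_cong)
  from vderiv_const[OF S this, of t]
  have "c 0 t - (\<Sum>j<Suc N. (t ^ j / fact j) *\<^sub>R c j 0) = c 0 0 - (\<Sum>j<Suc N. (0 ^ j / fact j) *\<^sub>R c j 0)" .
  also have "(\<Sum>j<Suc N. ((0::real) ^ j / fact j) *\<^sub>R c j 0) = c 0 0"
    by (subst sum.lessThan_Suc_shift) simp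
  finally show ?case by simp
qed

definition sv_cmul :: "(nat set \<Rightarrow> real) \<Rightarrow> ('a::real_vector, 'b::real_vector) sv \<Rightarrow> ('a, 'b) sv" where
  "sv_cmul c z = (\<lambda>I. c I *\<^sub>R fst z I, \<lambda>I. c I *\<^sub>R snd z I)"

lemma sv_scale_cmul: "sv_scale c z = sv_cmul (\<lambda>_. c) z"
  unfolding sv_scale_def sv_cmul_def by simp

lemma sv_diff_cmul: "sv_diff (sv_cmul c a) (sv_cmul c b) = sv_cmul c (sv_diff a b)"
  unfolding sv_diff_def sv_cmul_def by (simp add: algebra_simps)

lemma sv_diff_cmul2: "sv_diff (sv_cmul c a) (sv_cmul d a) = sv_cmul (\<lambda>I. c I - d I) a"
  unfolding sv_diff_def sv_cmul_def by (simp add: algebra_simps)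

lemma sv_add_cmul: "sv_cmul c (sv_add a b) = sv_add (sv_cmul c a) (sv_cmul c b)"
  unfolding sv_add_def sv_cmul_def by (simp add: algebra_simps)

lemma sv_cmul_cmul: "sv_cmul c (sv_cmul d a) = sv_cmul (\<lambda>I. c I * d I) a"
  unfolding sv_cmul_def by simp

lemma sv_eqI: "(\<And>I. fst x I = fst y I) \<Longrightarrow> (\<And>I. snd x I = snd y I) \<Longrightarrow> x = y"
  by (simp add: prod_eq_iff fun_eq_iff)

lemma svsn_cases:
  assumes "q \<in> sv_seminorms SA SB"
  obtains p I where "p \<in> SA" "q = (\<lambda>x. p (fst x I))" | p I where "p \<in> SB" "q = (\<lambda>x. p (snd x I))"
  using assms unfolding sv_seminorms_def by blast

context
  fixes SA :: "('a::real_vector \<Rightarrow> real) set" and SB :: "('b::real_vector \<Rightarrow> real) set"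
  assumes lcA: "lc_space SA" and lcB: "lc_space SB"
begin

lemma q_nn: "q \<in> sv_seminorms SA SB \<Longrightarrow> 0 \<le> q z"
  by (erule svsn_cases) (auto simp: sn_nonneg lc_sn[OF lcA] lc_sn[OF lcB])

lemma q_cmul: "q \<in> sv_seminorms SA SB \<Longrightarrow> \<exists>I. \<forall>c z. q (sv_cmul c z) = \<bar>c I\<bar> * q z"
  by (erule svsn_cases) (auto simp: sv_cmul_def sn_scale lc_sn[OF lcA] lc_sn[OF lcB])

lemma q_scale: "q \<in> sv_seminorms SA SB \<Longrightarrow> q (sv_scale c z) = \<bar>c\<bar> * q z"
  unfolding sv_scale_cmul using q_cmul by fastforce

lemma q_zero: "q \<in> sv_seminorms SA SB \<Longrightarrow> q sv_zero = 0"
  using q_scale[of q 0 sv_zero] by (simp add: sv_scale_def sv_zero_def)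

lemma q_add: "q \<in> sv_seminorms SA SB \<Longrightarrow> q (sv_add a b) \<le> q a + q b"
  by (erule svsn_cases) (auto simp: sv_add_def sn_add lc_sn[OF lcA] lc_sn[OF lcB])

lemma q_tri: "q \<in> sv_seminorms SA SB \<Longrightarrow> q (sv_diff a c) \<le> q (sv_diff a b) + q (sv_diff b c)"
  by (erule svsn_cases) (auto simp: sv_diff_def intro: sn_diff_tri lc_sn[OF lcA] lc_sn[OF lcB])

lemma q_sym: "q \<in> sv_seminorms SA SB \<Longrightarrow> q (sv_diff a b) = q (sv_diff b a)"
  by (erule svsn_cases) (auto simp: sv_diff_def intro: sn_diff_sym lc_sn[OF lcA] lc_sn[OF lcB])

lemma q_sep: "(\<And>q. q \<in> sv_seminorms SA SB \<Longrightarrow> q (sv_diff a b) = 0) \<Longrightarrow> a = b"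
proof (rule sv_eqI)
  assume H: "\<And>q. q \<in> sv_seminorms SA SB \<Longrightarrow> q (sv_diff a b) = 0"
  fix I
  have "fst a I - fst b I = 0"
  proof (rule lc_sep[OF lcA])
    fix p assume "p \<in> SA"
    then have "(\<lambda>x. p (fst x I)) \<in> sv_seminorms SA SB" unfolding sv_seminorms_def by blast
    from H[OF this] show "p (fst a I - fst b I) = 0" by (simp add: sv_diff_def)
  qed
  then show "fst a I = fst b I" by simp
  have "snd a I - snd b I = 0"
  proof (rule lc_sep[OF lcB])
    fix p assume "p \<in> SB"
    then have "(\<lambda>x. p (snd x I)) \<in> sv_seminorms SA SB" unfolding sv_seminorms_def by blast
    from H[OF this] show "p (snd a I - snd b I) = 0" by (simp add: sv_diff_def)
  qed
  then show "snd a I = snd b I" by simp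
qed

lemma lim_unique:
  assumes g1: "sv_lim0 SA SB g w1" and g2: "sv_lim0 SA SB g w2"
  shows "w1 = w2"
proof (rule q_sep)
  fix q assume q: "q \<in> sv_seminorms SA SB"
  have "q (sv_diff w1 w2) < 2 * \<epsilon>" if e: "\<epsilon> > 0" for \<epsilon>
  proof -
    obtain d1 where d1: "d1 > 0" "\<forall>t. t \<noteq> 0 \<and> \<bar>t\<bar> < d1 \<longrightarrow> q (sv_diff (g t) w1) < \<epsilon>"
      using g1 q e unfolding sv_lim0_def by blast
    obtain d2 where d2: "d2 > 0" "\<forall>t. t \<noteq> 0 \<and> \<bar>t\<bar> < d2 \<longrightarrow> q (sv_diff (g t) w2) < \<epsilon>"
      using g2 q e unfolding sv_lim0_def by blast
    define t where "t = min d1 d2 / 2"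
    have t: "t \<noteq> 0" "\<bar>t\<bar> < d1" "\<bar>t\<bar> < d2" using d1 d2 unfolding t_def by auto
    have "q (sv_diff w1 w2) \<le> q (sv_diff w1 (g t)) + q (sv_diff (g t) w2)" by (rule q_tri[OF q])
    also have "\<dots> = q (sv_diff (g t) w1) + q (sv_diff (g t) w2)" using q_sym[OF q] by simp
    also have "\<dots> < 2 * \<epsilon>" using d1(2) d2(2) t by fastforce
    finally show ?thesis .
  qed
  then have "q (sv_diff w1 w2) \<le> 0"
  proof -
    assume H: "\<And>\<epsilon>. \<epsilon> > 0 \<Longrightarrow> q (sv_diff w1 w2) < 2 * \<epsilon>"
    show ?thesis
    proof (rule ccontr)
      assume "\<not> q (sv_diff w1 w2) \<le> 0"
      then have "q (sv_diff w1 w2) / 2 > 0" by simp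
      from H[OF this] show False by simp
    qed
  qed
  then show "q (sv_diff w1 w2) = 0" using q_nn[OF q] by (meson order.antisym)
qed

lemma lim_cmul:
  assumes g: "sv_lim0 SA SB g w"
  shows "sv_lim0 SA SB (\<lambda>t. sv_cmul c (g t)) (sv_cmul c w)"
  unfolding sv_lim0_def
proof (intro ballI allI impI)
  fix q and \<epsilon> :: real assume q: "q \<in> sv_seminorms SA SB" and e: "\<epsilon> > 0"
  obtain I where I: "\<forall>c z. q (sv_cmul c z) = \<bar>c I\<bar> * q z" using q_cmul[OF q] by blast
  have e': "\<epsilon> / (\<bar>c I\<bar> + 1) > 0" using e by auto
  obtain d where d: "d > 0" "\<forall>t. t \<noteq> 0 \<and> \<bar>t\<bar> < d \<longrightarrow> q (sv_diff (g t) w) < \<epsilon> / (\<bar>c I\<bar> + 1)"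
    using g q e' unfolding sv_lim0_def by blast
  show "\<exists>\<delta>>0. \<forall>t. t \<noteq> 0 \<and> \<bar>t\<bar> < \<delta> \<longrightarrow> q (sv_diff (sv_cmul c (g t)) (sv_cmul c w)) < \<epsilon>"
  proof (intro exI[of _ d] conjI allI impI d(1))
    fix t assume t: "t \<noteq> 0 \<and> \<bar>t\<bar> < d"
    have "q (sv_diff (sv_cmul c (g t)) (sv_cmul c w)) = \<bar>c I\<bar> * q (sv_diff (g t) w)"
      by (simp add: sv_diff_cmul I)
    also have "\<dots> \<le> \<bar>c I\<bar> * (\<epsilon> / (\<bar>c I\<bar> + 1))"
      using d(2) t by (intro mult_left_mono) auto
    also have "\<dots> < \<epsilon>" using e by (simp add: field_simps)
    finally show "q (sv_diff (sv_cmul c (g t)) (sv_cmul c w)) < \<epsilon>" .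
  qed
qed

lemma lim_reparam:
  assumes g: "sv_lim0 SA SB g w" and s: "s \<noteq> 0"
  shows "sv_lim0 SA SB (\<lambda>t. g (s * t)) w"
  unfolding sv_lim0_def
proof (intro ballI allI impI)
  fix q and \<epsilon> :: real assume q: "q \<in> sv_seminorms SA SB" and e: "\<epsilon> > 0"
  obtain d where d: "d > 0" "\<forall>t. t \<noteq> 0 \<and> \<bar>t\<bar> < d \<longrightarrow> q (sv_diff (g t) w) < \<epsilon>"
    using g q e unfolding sv_lim0_def by blast
  show "\<exists>\<delta>>0. \<forall>t. t \<noteq> 0 \<and> \<bar>t\<bar> < \<delta> \<longrightarrow> q (sv_diff (g (s * t)) w) < \<epsilon>"
  proof (intro exI[of _ "d / \<bar>s\<bar>"] conjI allI impI)
    show "d / \<bar>s\<bar> > 0" using d s by auto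
    fix t assume t: "t \<noteq> 0 \<and> \<bar>t\<bar> < d / \<bar>s\<bar>"
    then have "\<bar>s * t\<bar> < d" using s by (simp add: abs_mult field_simps)
    then show "q (sv_diff (g (s * t)) w) < \<epsilon>" using d(2) t s by auto
  qed
qed

lemma lim_eventually:
  assumes g: "sv_lim0 SA SB g w" and d0: "d0 > 0" and eq: "\<And>t. t \<noteq> 0 \<Longrightarrow> \<bar>t\<bar> < d0 \<Longrightarrow> g2 t = g t"
  shows "sv_lim0 SA SB g2 w"
  unfolding sv_lim0_def
proof (intro ballI allI impI)
  fix q and \<epsilon> :: real assume q: "q \<in> sv_seminorms SA SB" and e: "\<epsilon> > 0"
  obtain d where d: "d > 0" "\<forall>t. t \<noteq> 0 \<and> \<bar>t\<bar> < d \<longrightarrow> q (sv_diff (g t) w) < \<epsilon>"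
    using g q e unfolding sv_lim0_def by blast
  show "\<exists>\<delta>>0. \<forall>t. t \<noteq> 0 \<and> \<bar>t\<bar> < \<delta> \<longrightarrow> q (sv_diff (g2 t) w) < \<epsilon>"
    using d d0 eq by (intro exI[of _ "min d d0"]) auto
qed

end

definition dsc :: "nat \<Rightarrow> real \<Rightarrow> nat set \<Rightarrow> real" where
  "dsc n s I = (if I \<subseteq> {..<n} then s ^ card I else 0)"

definition dsc' :: "nat \<Rightarrow> real \<Rightarrow> nat set \<Rightarrow> real" where
  "dsc' n s I = (if I \<subseteq> {..<n} then s ^ (card I - 1) else 0)"

lemma bar_add: "a \<in> bar_space n \<Longrightarrow> b \<in> bar_space n \<Longrightarrow> sv_add a b \<in> bar_space n"
proof -
  assume a: "a \<in> bar_space n" and b: "b \<in> bar_space n"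
  have "fst a I + fst b I \<noteq> 0 \<Longrightarrow> I \<subseteq> {..<n} \<and> even (card I)" for I
  proof -
    assume "fst a I + fst b I \<noteq> 0"
    then have "fst a I \<noteq> 0 \<or> fst b I \<noteq> 0" by auto
    then show ?thesis using a b unfolding bar_space_def by auto
  qed
  moreover have "snd a I + snd b I \<noteq> 0 \<Longrightarrow> I \<subseteq> {..<n} \<and> odd (card I)" for I
  proof -
    assume "snd a I + snd b I \<noteq> 0"
    then have "snd a I \<noteq> 0 \<or> snd b I \<noteq> 0" by auto
    then show ?thesis using a b unfolding bar_space_def by auto
  qed
  ultimately show ?thesis unfolding bar_space_def sv_add_def by simp
qed

lemma bar_cmul: "a \<in> bar_space n \<Longrightarrow> sv_cmul c a \<in> bar_space n"
  unfolding bar_space_def sv_cmul_def by auto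

lemma bar_scale: "a \<in> bar_space n \<Longrightarrow> sv_scale c a \<in> bar_space n"
  unfolding sv_scale_cmul by (rule bar_cmul)

lemma bar_snd_empty: "a \<in> bar_space n \<Longrightarrow> snd a {} = 0"
  unfolding bar_space_def by auto

lemma bar_out: "a \<in> bar_space n \<Longrightarrow> \<not> J \<subseteq> {..<n} \<Longrightarrow> fst a J = 0 \<and> snd a J = 0"
  unfolding bar_space_def by auto

lemma T1_id: "a \<in> bar_space n \<Longrightarrow> sv_cmul (dsc n 1) a = a"
  by (rule sv_eqI) (auto simp: sv_cmul_def dsc_def dest: bar_out)

lemma dsc_split: "I \<noteq> {} \<Longrightarrow> dsc n s I = s * dsc' n s I"
proof (cases "I \<subseteq> {..<n}")
  case True
  assume I: "I \<noteq> {}"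
  have "finite I" using True finite_subset by blast
  then obtain m where m: "card I = Suc m" using I by (metis card_0_eq not0_implies_Suc)
  have "s ^ card I = s * s ^ (card I - 1)" unfolding m by simp
  then show ?thesis using True unfolding dsc_def dsc'_def by (simp only: if_True)
next
  case False then show ?thesis unfolding dsc_def dsc'_def by simp
qed

lemma T_T': "a \<in> bar_space n \<Longrightarrow> fst a {} = 0 \<Longrightarrow> sv_cmul (dsc n s) a = sv_scale s (sv_cmul (dsc' n s) a)"
proof (rule sv_eqI)
  assume a: "a \<in> bar_space n" "fst a {} = 0"
  fix I
  show "fst (sv_cmul (dsc n s) a) I = fst (sv_scale s (sv_cmul (dsc' n s) a)) I"
  proof (cases "I = {}")
    case True then show ?thesis using a by (simp add: sv_cmul_def sv_scale_def)
  next
    case False then show ?thesis by (simp add: sv_cmul_def sv_scale_def dsc_split)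
  qed
  show "snd (sv_cmul (dsc n s) a) I = snd (sv_scale s (sv_cmul (dsc' n s) a)) I"
  proof (cases "I = {}")
    case True then show ?thesis using bar_snd_empty[OF a(1)] by (simp add: sv_cmul_def sv_scale_def)
  next
    case False then show ?thesis by (simp add: sv_cmul_def sv_scale_def dsc_split)
  qed
qed

lemma dsc_tendsto: "((\<lambda>s. dsc n s J) \<longlongrightarrow> dsc n 0 J) (at 0)"
proof (cases "J \<subseteq> {..<n}")
  case True
  have "((\<lambda>s::real. s ^ card J) \<longlongrightarrow> 0 ^ card J) (at 0)" by (intro tendsto_intros)
  then show ?thesis using True unfolding dsc_def by (simp only: if_True)
next
  case False then show ?thesis unfolding dsc_def by (simp only: if_False tendsto_const)
qed

lemma dsc'_tendsto: "((\<lambda>s. dsc' n s J) \<longlongrightarrow> dsc' n 0 J) (at 0)"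
proof (cases "J \<subseteq> {..<n}")
  case True
  have "((\<lambda>s::real. s ^ (card J - 1)) \<longlongrightarrow> 0 ^ (card J - 1)) (at 0)" by (intro tendsto_intros)
  then show ?thesis using True unfolding dsc'_def by (simp only: if_True)
next
  case False then show ?thesis unfolding dsc'_def by (simp only: if_False tendsto_const)
qed

lemma sv_add_0: "sv_add y (sv_scale 0 h) = y"
  by (rule sv_eqI) (auto simp: sv_add_def sv_scale_def)

lemma sv_scale_1: "sv_scale 1 h = h"
  by (rule sv_eqI) (auto simp: sv_scale_def)

lemma sv_diff_zero: "sv_diff a sv_zero = a"
  by (rule sv_eqI) (auto simp: sv_diff_def sv_zero_def)

lemma sv_diff_add_scale: "sv_diff (sv_add y (sv_scale t h)) y = sv_scale t h"
  by (rule sv_eqI) (auto simp: sv_diff_def sv_add_def sv_scale_def)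

lemma sv_line_shift: "sv_add (sv_add y (sv_scale t h)) (sv_scale \<tau> h) = sv_add y (sv_scale (t + \<tau>) h)"
  by (rule sv_eqI) (auto simp: sv_add_def sv_scale_def algebra_simps)

lemma sv_scale_scale: "sv_scale a (sv_scale b h) = sv_scale (a * b) h"
  by (rule sv_eqI) (auto simp: sv_scale_def)

lemma sv_cmul_scale: "sv_cmul c (sv_scale a h) = sv_scale a (sv_cmul c h)"
  by (rule sv_eqI) (auto simp: sv_scale_def sv_cmul_def)

lemma sv_cmul_diff: "sv_cmul c (sv_diff a b) = sv_diff (sv_cmul c a) (sv_cmul c b)"
  by (rule sv_eqI) (auto simp: sv_diff_def sv_cmul_def algebra_simps)

lemma sv_scale_diff: "sv_scale c (sv_diff a b) = sv_diff (sv_scale c a) (sv_scale c b)"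
  by (rule sv_eqI) (auto simp: sv_diff_def sv_scale_def algebra_simps)

lemma diff_quot_hom:
  assumes "s \<noteq> 0" "\<tau> \<noteq> 0"
  shows "sv_scale (1 / \<tau>) (sv_diff (sv_scale a X) (sv_scale a Y)) = sv_scale (a * s) (sv_scale (1 / (s * \<tau>)) (sv_diff X Y))"
  using assms by (intro sv_eqI) (auto simp: sv_diff_def sv_scale_def algebra_simps)

locale sctx =
  fixes SA :: "('a::real_vector \<Rightarrow> real) set" and SB :: "('b::real_vector \<Rightarrow> real) set"
    and SC :: "('c::real_vector \<Rightarrow> real) set" and SD :: "('d::real_vector \<Rightarrow> real) set"
    and n :: nat and V :: "('a, 'b) sv set" and F :: "('a, 'b) sv \<Rightarrow> ('c, 'd) sv"
  assumes lcA: "lc_space SA" and lcB: "lc_space SB" and lcC: "lc_space SC" and lcD: "lc_space SD"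
    and sm: "bastiani_smooth SA SB SC SD n V F"
    and natF: "\<And>y s. y \<in> V \<Longrightarrow> F (sv_cmul (dsc n s) y) = sv_cmul (dsc n s) (F y)"
    and clV: "\<And>y s. y \<in> V \<Longrightarrow> sv_cmul (dsc n s) y \<in> V"
begin

abbreviation D where "D y hs \<equiv> diff_iter SC SD F y hs"

lemmas smu = sm[unfolded bastiani_smooth_def]

lemma sm_open: "sv_open SA SB n V"
  by (rule conjunct1[OF smu])

lemma sm_deriv: "x \<in> V \<Longrightarrow> set (h # hs) \<subseteq> bar_space n \<Longrightarrow>
   \<exists>w. sv_lim0 SC SD (diff_quot (\<lambda>y. D y hs) x h) w"
proof -
  assume a: "x \<in> V" "set (h # hs) \<subseteq> bar_space n"
  have "\<forall>x\<in>V. \<forall>h hs. set (h # hs) \<subseteq> bar_space n \<longrightarrow>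
        (\<exists>w. sv_lim0 SC SD (diff_quot (\<lambda>y. D y hs) x h) w)"
    by (rule conjunct1[OF conjunct2[OF conjunct2[OF smu]]])
  then show ?thesis using a by blast
qed

lemma sm_cont: "sv_cont_lists SA SB SC SD n V k (\<lambda>ys. D (hd ys) (tl ys))"
proof -
  have "\<forall>k. sv_cont_lists SA SB SC SD n V k (\<lambda>ys. D (hd ys) (tl ys))"
    by (rule conjunct2[OF conjunct2[OF conjunct2[OF smu]]])
  then show ?thesis by blast
qed

lemma V_bar: "y \<in> V \<Longrightarrow> y \<in> bar_space n"
proof -
  assume y: "y \<in> V"
  have "V \<subseteq> bar_space n" using sm_open unfolding sv_open_def by (rule conjunct1)
  then show ?thesis using y by (rule subsetD)
qed

lemma open_line:
  assumes y: "y \<in> V" and h: "h \<in> bar_space n"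
  shows "\<exists>\<delta>>0. \<forall>\<tau>. \<bar>\<tau>\<bar> < \<delta> \<longrightarrow> sv_add y (sv_scale \<tau> h) \<in> V"
proof -
  obtain P \<epsilon> where P: "finite P" "P \<subseteq> sv_seminorms SA SB" "\<epsilon> > 0"
    "{z \<in> bar_space n. \<forall>p\<in>P. p (sv_diff z y) < \<epsilon>} \<subseteq> V"
  proof -
    have "\<exists>P \<epsilon>. finite P \<and> P \<subseteq> sv_seminorms SA SB \<and> \<epsilon> > 0 \<and>
        {z \<in> bar_space n. \<forall>p\<in>P. p (sv_diff z y) < \<epsilon>} \<subseteq> V"
      using sm_open y unfolding sv_open_def by (elim conjE) (erule bspec)
    then show ?thesis using that by blast
  qed
  define M where "M = (\<Sum>q\<in>P. q h)"

  have nn: "\<forall>q\<in>P. 0 \<le> q h" using P(2) q_nn[OF lcA lcB] by blast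
  have qM: "q h \<le> M" if "q \<in> P" for q
    unfolding M_def using P(1) that nn by (intro member_le_sum) auto
  have M0: "M \<ge> 0" unfolding M_def using nn by (simp add: sum_nonneg)
  show ?thesis
  proof (intro exI[of _ "\<epsilon> / (M + 1)"] conjI allI impI)
    show "\<epsilon> / (M + 1) > 0" using P(3) M0 by auto
    fix \<tau> :: real assume \<tau>: "\<bar>\<tau>\<bar> < \<epsilon> / (M + 1)"
    have "sv_add y (sv_scale \<tau> h) \<in> {z \<in> bar_space n. \<forall>p\<in>P. p (sv_diff z y) < \<epsilon>}"
    proof (intro CollectI conjI ballI)
      show "sv_add y (sv_scale \<tau> h) \<in> bar_space n" by (intro bar_add bar_scale V_bar y h)
      fix p assume p: "p \<in> P"
      have pp: "p \<in> sv_seminorms SA SB" using p P(2) by auto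
      have "p (sv_diff (sv_add y (sv_scale \<tau> h)) y) = \<bar>\<tau>\<bar> * p h"
        by (simp add: sv_diff_add_scale q_scale[OF lcA lcB pp])
      also have "\<dots> \<le> \<bar>\<tau>\<bar> * M" using qM[OF p] by (simp add: mult_left_mono)
      also have "\<dots> \<le> \<epsilon> / (M + 1) * M" using \<tau> M0 by (intro mult_right_mono) auto
      also have "\<dots> < \<epsilon>" using P(3) M0 by (simp add: field_simps)
      finally show "p (sv_diff (sv_add y (sv_scale \<tau> h)) y) < \<epsilon>" .
    qed
    then show "sv_add y (sv_scale \<tau> h) \<in> V" using P(4) by blast
  qed
qed

lemma D_lim:
  assumes z: "z \<in> V" and h: "h \<in> bar_space n" and hs: "set hs \<subseteq> bar_space n"
  shows "sv_lim0 SC SD (diff_quot (\<lambda>y. D y hs) z h) (D z (h # hs))"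
proof -
  have hh: "set (h # hs) \<subseteq> bar_space n" using h hs by simp
  obtain w where w: "sv_lim0 SC SD (diff_quot (\<lambda>y. D y hs) z h) w"
    using sm_deriv[OF z hh] by (elim exE)
  have uniq: "w' = w" if "sv_lim0 SC SD (diff_quot (\<lambda>y. D y hs) z h) w'" for w'
    by (rule lim_unique[OF lcC lcD that w])
  have "dir_deriv SC SD (\<lambda>y. D y hs) z h = w"
    unfolding dir_deriv_def by (rule the_equality[of _ w], rule w, erule uniq)
  then have "D z (h # hs) = w" by (simp only: diff_iter.simps)
  then show ?thesis using w by (simp only:)
qed

lemma D_nat:
  assumes "set hs \<subseteq> bar_space n"
  shows "y \<in> V \<Longrightarrow> sv_cmul (dsc n s) (D y hs) = D (sv_cmul (dsc n s) y) (map (sv_cmul (dsc n s)) hs)"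
  using assms
proof (induction hs arbitrary: y)
  case Nil
  then show ?case by (simp only: diff_iter.simps list.map natF)
next
  case (Cons h hs)
  define T :: "('a, 'b) sv \<Rightarrow> ('a, 'b) sv" where "T = sv_cmul (dsc n s)"
  define T2 :: "('c, 'd) sv \<Rightarrow> ('c, 'd) sv" where "T2 = sv_cmul (dsc n s)"
  have y: "y \<in> V" and h: "h \<in> bar_space n" and hs: "set hs \<subseteq> bar_space n" using Cons.prems by auto
  have IH: "\<And>z. z \<in> V \<Longrightarrow> T2 (D z hs) = D (T z) (map T hs)"
    unfolding T_def T2_def using Cons.IH hs by blast
  have L: "sv_lim0 SC SD (diff_quot (\<lambda>z. D z hs) y h) (D y (h # hs))" by (rule D_lim[OF y h hs])
  have L2: "sv_lim0 SC SD (\<lambda>\<tau>. T2 (diff_quot (\<lambda>z. D z hs) y h \<tau>)) (T2 (D y (h # hs)))"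
    unfolding T2_def by (rule lim_cmul[OF lcC lcD L])
  obtain \<delta> where \<delta>: "\<delta> > 0" "\<And>\<tau>. \<bar>\<tau>\<bar> < \<delta> \<Longrightarrow> sv_add y (sv_scale \<tau> h) \<in> V"
    using open_line[OF y h] by blast
  have eq: "diff_quot (\<lambda>z. D z (map T hs)) (T y) (T h) \<tau> = T2 (diff_quot (\<lambda>z. D z hs) y h \<tau>)"
    if "\<tau> \<noteq> 0" "\<bar>\<tau>\<bar> < \<delta>" for \<tau>
  proof -
    have yt: "sv_add y (sv_scale \<tau> h) \<in> V" using \<delta>(2) that by blast
    have a: "sv_add (T y) (sv_scale \<tau> (T h)) = T (sv_add y (sv_scale \<tau> h))"
      unfolding T_def by (simp only: sv_add_cmul sv_cmul_scale)
    show ?thesis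
      unfolding diff_quot_def a IH[OF yt, symmetric] IH[OF y, symmetric]
      unfolding T2_def by (simp only: sv_cmul_diff sv_cmul_scale)
  qed
  have L3: "sv_lim0 SC SD (diff_quot (\<lambda>z. D z (map T hs)) (T y) (T h)) (T2 (D y (h # hs)))"
    by (rule lim_eventually[OF lcC lcD L2 \<delta>(1) eq])
  have Ty: "T y \<in> V" unfolding T_def by (rule clV[OF y])
  have Th: "T h \<in> bar_space n" unfolding T_def by (rule bar_cmul[OF h])
  have Ths: "set (map T hs) \<subseteq> bar_space n" using hs unfolding T_def by (auto intro!: bar_cmul)
  have L4: "sv_lim0 SC SD (diff_quot (\<lambda>z. D z (map T hs)) (T y) (T h)) (D (T y) (T h # map T hs))"
    by (rule D_lim[OF Ty Th Ths])
  have "T2 (D y (h # hs)) = D (T y) (T h # map T hs)" by (rule lim_unique[OF lcC lcD L3 L4])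
  then show ?case unfolding T_def T2_def by simp
qed

lemma D_hom:
  assumes "set hs \<subseteq> bar_space n" and s: "s \<noteq> 0"
  shows "z \<in> V \<Longrightarrow> D z (map (sv_scale s) hs) = sv_scale (s ^ length hs) (D z hs)"
  using assms(1)
proof (induction hs arbitrary: z)
  case Nil
  then show ?case by (simp only: diff_iter.simps list.map list.size power_0 sv_scale_1)
next
  case (Cons k ks)
  have z: "z \<in> V" and k: "k \<in> bar_space n" and ks: "set ks \<subseteq> bar_space n" using Cons.prems by auto
  define N where "N = length ks"
  have IH: "\<And>y. y \<in> V \<Longrightarrow> D y (map (sv_scale s) ks) = sv_scale (s ^ N) (D y ks)"
    unfolding N_def using Cons.IH ks by blast
  have L: "sv_lim0 SC SD (diff_quot (\<lambda>y. D y ks) z k) (D z (k # ks))" by (rule D_lim[OF z k ks])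
  have Lr: "sv_lim0 SC SD (\<lambda>\<tau>. diff_quot (\<lambda>y. D y ks) z k (s * \<tau>)) (D z (k # ks))"
    by (rule lim_reparam[OF lcC lcD L s])
  have Lc: "sv_lim0 SC SD (\<lambda>\<tau>. sv_scale (s ^ Suc N) (diff_quot (\<lambda>y. D y ks) z k (s * \<tau>)))
     (sv_scale (s ^ Suc N) (D z (k # ks)))"
    unfolding sv_scale_cmul by (rule lim_cmul[OF lcC lcD Lr])
  obtain \<delta> where \<delta>: "\<delta> > 0" "\<And>\<tau>. \<bar>\<tau>\<bar> < \<delta> \<Longrightarrow> sv_add z (sv_scale \<tau> k) \<in> V"
    using open_line[OF z k] by blast
  have d0: "\<delta> / \<bar>s\<bar> > 0" using \<delta>(1) s by auto
  have eq: "diff_quot (\<lambda>y. D y (map (sv_scale s) ks)) z (sv_scale s k) \<tau>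
      = sv_scale (s ^ Suc N) (diff_quot (\<lambda>y. D y ks) z k (s * \<tau>))"
    if "\<tau> \<noteq> 0" "\<bar>\<tau>\<bar> < \<delta> / \<bar>s\<bar>" for \<tau>
  proof -
    have "\<bar>s * \<tau>\<bar> < \<delta>" using that s by (simp add: abs_mult field_simps)
    then have zt: "sv_add z (sv_scale (s * \<tau>) k) \<in> V" using \<delta>(2) by blast
    have a: "sv_scale \<tau> (sv_scale s k) = sv_scale (s * \<tau>) k"
      by (simp only: sv_scale_scale mult.commute)
    have b: "s ^ Suc N = s ^ N * s" by (simp only: power_Suc2)
    show ?thesis
      unfolding diff_quot_def a IH[OF zt] IH[OF z] b
      by (rule diff_quot_hom[OF s that(1)])
  qed
  have L3: "sv_lim0 SC SD (diff_quot (\<lambda>y. D y (map (sv_scale s) ks)) z (sv_scale s k))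
      (sv_scale (s ^ Suc N) (D z (k # ks)))"
    by (rule lim_eventually[OF lcC lcD Lc d0 eq])
  have sk: "sv_scale s k \<in> bar_space n" by (rule bar_scale[OF k])
  have sks: "set (map (sv_scale s) ks) \<subseteq> bar_space n" using ks by (auto intro!: bar_scale)
  have L4: "sv_lim0 SC SD (diff_quot (\<lambda>y. D y (map (sv_scale s) ks)) z (sv_scale s k))
      (D z (sv_scale s k # map (sv_scale s) ks))"
    by (rule D_lim[OF z sk sks])
  have "sv_scale (s ^ Suc N) (D z (k # ks)) = D z (sv_scale s k # map (sv_scale s) ks)"
    by (rule lim_unique[OF lcC lcD L3 L4])
  then show ?case unfolding N_def by simp
qed

end

lemma ev_cmul:
  assumes lcA: "lc_space SA" and lcB: "lc_space SB" and p: "p \<in> sv_seminorms SA SB"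
    and c: "\<And>J. ((\<lambda>s. c s J) \<longlongrightarrow> c0 J) (at (0::real))" and d: "\<delta> > 0"
  shows "eventually (\<lambda>s. p (sv_diff (sv_cmul (c s) z) (sv_cmul c0 z)) < \<delta>) (at 0)"
proof -
  obtain J where J: "\<forall>c z. p (sv_cmul c z) = \<bar>c J\<bar> * p z" using q_cmul[OF lcA lcB p] by blast
  have eq: "p (sv_diff (sv_cmul (c s) z) (sv_cmul c0 z)) = \<bar>c s J - c0 J\<bar> * p z" for s
    by (simp only: sv_diff_cmul2 J)
  have "((\<lambda>s. \<bar>c s J - c0 J\<bar> * p z) \<longlongrightarrow> \<bar>c0 J - c0 J\<bar> * p z) (at 0)"
    by (intro tendsto_intros c)
  then have "((\<lambda>s. \<bar>c s J - c0 J\<bar> * p z) \<longlongrightarrow> 0) (at 0)" by simp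
  from order_tendstoD(2)[OF this d] show ?thesis unfolding eq .
qed

lemma ev_nonzero: "eventually (\<lambda>s::real. s \<noteq> 0) (at 0)"
  unfolding eventually_at by (intro exI[of _ 1]) auto

context sctx begin

lemma vanish:
  assumes y: "y \<in> V" and hs: "set hs \<subseteq> bar_space n" and nil: "\<forall>h\<in>set hs. fst h {} = 0"
    and len: "length hs > n"
  shows "D y hs = sv_zero"
proof -
  define N where "N = length hs"
  define T :: "real \<Rightarrow> ('a, 'b) sv \<Rightarrow> ('a, 'b) sv" where "T s = sv_cmul (dsc n s)" for s
  define T' :: "real \<Rightarrow> ('a, 'b) sv \<Rightarrow> ('a, 'b) sv" where "T' s = sv_cmul (dsc' n s)" for s
  define W where "W = D y hs"
  have yb: "y \<in> bar_space n" by (rule V_bar[OF y])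
  have W1: "sv_cmul (dsc n 1) W = W"
  proof -
    have "sv_cmul (dsc n 1) W = D (sv_cmul (dsc n 1) y) (map (sv_cmul (dsc n 1)) hs)"
      unfolding W_def by (rule D_nat[OF hs y])
    also have "sv_cmul (dsc n 1) y = y" by (rule T1_id[OF yb])
    also have "map (sv_cmul (dsc n 1)) hs = hs"
      by (rule map_idI) (use hs T1_id in blast)
    finally show ?thesis unfolding W_def .
  qed
  have key: "sv_cmul (dsc n s) W = sv_scale (s ^ N) (D (T s y) (map (T' s) hs))" if s: "s \<noteq> 0" for s
  proof -
    have "sv_cmul (dsc n s) W = D (T s y) (map (T s) hs)"
      unfolding W_def T_def by (rule D_nat[OF hs y])
    also have "map (T s) hs = map (sv_scale s) (map (T' s) hs)"
      unfolding map_map T_def T'_def o_def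
      by (rule map_cong[OF refl]) (use hs nil T_T' in blast)
    also have "D (T s y) (map (sv_scale s) (map (T' s) hs)) = sv_scale (s ^ length (map (T' s) hs)) (D (T s y) (map (T' s) hs))"
    proof (rule D_hom[OF _ s])
      show "set (map (T' s) hs) \<subseteq> bar_space n" using hs unfolding T'_def by (auto intro!: bar_cmul)
      show "T s y \<in> V" unfolding T_def by (rule clV[OF y])
    qed
    finally show ?thesis unfolding N_def by simp
  qed
  have "sv_diff W sv_zero = sv_zero"
  proof (rule q_sep[OF lcC lcD])
    fix q assume q: "q \<in> sv_seminorms SC SD"
    obtain I where I: "\<forall>c z. q (sv_cmul c z) = \<bar>c I\<bar> * q z" using q_cmul[OF lcC lcD q] by blast
    have qW: "q W = 0"
    proof (cases "I \<subseteq> {..<n}")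
      case False
      have "q W = q (sv_cmul (dsc n 1) W)" using W1 by simp
      also have "\<dots> = 0" using False by (simp only: I) (simp add: dsc_def)
      finally show ?thesis .
    next
      case True
      define m where "m = card I"
      have mn: "m \<le> n" unfolding m_def using card_mono[OF _ True] by simp
      then have mN: "m < N" using len unfolding N_def by simp
      define xs where "xs = T 0 y # map (T' 0) hs"
      define ys where "ys s = T s y # map (T' s) hs" for s
      have xs_props: "length xs = Suc N \<and> hd xs \<in> V \<and> set xs \<subseteq> bar_space n"
        unfolding xs_def N_def T_def T'_def using clV[OF y] hs yb by (auto intro!: bar_cmul)
      have ys_props: "length (ys s) = Suc N \<and> hd (ys s) \<in> V \<and> set (ys s) \<subseteq> bar_space n" for s
        unfolding ys_def N_def T_def T'_def using clV[OF y] hs yb by (auto intro!: bar_cmul)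
      have C: "\<forall>xs. length xs = Suc N \<and> hd xs \<in> V \<and> set xs \<subseteq> bar_space n \<longrightarrow>
       (\<forall>q\<in>sv_seminorms SC SD. \<forall>\<epsilon>>0. \<exists>P \<delta>. finite P \<and> P \<subseteq> sv_seminorms SA SB \<and> \<delta> > 0 \<and>
          (\<forall>ys. length ys = Suc N \<and> hd ys \<in> V \<and> set ys \<subseteq> bar_space n \<and>
                (\<forall>i<Suc N. \<forall>p\<in>P. p (sv_diff (ys ! i) (xs ! i)) < \<delta>)
                \<longrightarrow> q (sv_diff (D (hd ys) (tl ys)) (D (hd xs) (tl xs))) < \<epsilon>))"
        using sm_cont[of N] unfolding sv_cont_lists_def by simp
      have "\<exists>P \<delta>. finite P \<and> P \<subseteq> sv_seminorms SA SB \<and> \<delta> > 0 \<and>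
          (\<forall>ys. length ys = Suc N \<and> hd ys \<in> V \<and> set ys \<subseteq> bar_space n \<and>
                (\<forall>i<Suc N. \<forall>p\<in>P. p (sv_diff (ys ! i) (xs ! i)) < \<delta>)
                \<longrightarrow> q (sv_diff (D (hd ys) (tl ys)) (D (hd xs) (tl xs))) < 1)"
        using C[THEN spec[of _ xs], THEN mp, OF xs_props, THEN bspec, OF q, THEN spec[of _ 1]] by simp
      then obtain P \<delta> where P: "finite P" "P \<subseteq> sv_seminorms SA SB" "\<delta> > 0"
        "\<And>ys. length ys = Suc N \<Longrightarrow> hd ys \<in> V \<Longrightarrow> set ys \<subseteq> bar_space n \<Longrightarrow>
                (\<forall>i<Suc N. \<forall>p\<in>P. p (sv_diff (ys ! i) (xs ! i)) < \<delta>)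
                \<Longrightarrow> q (sv_diff (D (hd ys) (tl ys)) (D (hd xs) (tl xs))) < 1"
        by blast
      define W0 where "W0 = D (T 0 y) (map (T' 0) hs)"
      define B where "B = 1 + q W0"
      have ev1: "eventually (\<lambda>s. \<forall>i\<in>{..<Suc N}. \<forall>p\<in>P. p (sv_diff (ys s ! i) (xs ! i)) < \<delta>) (at 0)"
      proof (intro eventually_ball_finite ballI)
        show "finite {..<Suc N}" by simp
        show "finite P" by (rule P(1))
        fix i p assume i: "i \<in> {..<Suc N}" and p: "p \<in> P"
        have pp: "p \<in> sv_seminorms SA SB" using p P(2) by blast
        show "eventually (\<lambda>s. p (sv_diff (ys s ! i) (xs ! i)) < \<delta>) (at 0)"
        proof (cases i)
          case 0
          then show ?thesis unfolding ys_def xs_def T_def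
            using ev_cmul[OF lcA lcB pp dsc_tendsto[of n] P(3), where z=y] by simp
        next
          case (Suc j)
          then have j: "j < length hs" using i unfolding N_def by simp
          then show ?thesis unfolding ys_def xs_def T'_def Suc
            using ev_cmul[OF lcA lcB pp dsc'_tendsto[of n] P(3), where z="hs ! j"] by simp
        qed
      qed
      have bound: "q W \<le> \<bar>s\<bar> ^ (N - m) * B" if s: "s \<noteq> 0"
        and cl: "\<forall>i\<in>{..<Suc N}. \<forall>p\<in>P. p (sv_diff (ys s ! i) (xs ! i)) < \<delta>" for s
      proof -
        define Ws where "Ws = D (T s y) (map (T' s) hs)"
        have "q (sv_diff Ws W0) < 1"
          using P(4)[of "ys s"] ys_props[of s] cl unfolding Ws_def W0_def ys_def xs_def by simp
        moreover have "q (sv_diff Ws sv_zero) \<le> q (sv_diff Ws W0) + q (sv_diff W0 sv_zero)"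
          by (rule q_tri[OF lcC lcD q])
        ultimately have qWs: "q Ws \<le> B" unfolding B_def sv_diff_zero by simp
        have "\<bar>s\<bar> ^ m * q W = q (sv_cmul (dsc n s) W)"
          using True by (simp only: I) (simp add: dsc_def m_def power_abs)
        also have "\<dots> = q (sv_scale (s ^ N) Ws)" unfolding Ws_def key[OF s] ..
        also have "\<dots> = \<bar>s\<bar> ^ N * q Ws" by (simp add: q_scale[OF lcC lcD q] power_abs)
        also have "\<dots> \<le> \<bar>s\<bar> ^ N * B" using qWs by (simp add: mult_left_mono)
        also have "\<bar>s\<bar> ^ N = \<bar>s\<bar> ^ m * \<bar>s\<bar> ^ (N - m)"
          using mN by (simp add: power_add[symmetric])
        finally have "\<bar>s\<bar> ^ m * q W \<le> \<bar>s\<bar> ^ m * (\<bar>s\<bar> ^ (N - m) * B)" by (simp add: mult.assoc)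
        moreover have "\<bar>s\<bar> ^ m > 0" using s by simp
        ultimately show ?thesis by (simp add: mult_le_cancel_left_pos)
      qed
      have "q W < \<eta>" if eta: "\<eta> > 0" for \<eta>
      proof -
        have L: "((\<lambda>s::real. \<bar>s\<bar> ^ (N - m) * B) \<longlongrightarrow> \<bar>0\<bar> ^ (N - m) * B) (at 0)"
          by (intro tendsto_intros)
        have z: "\<bar>0::real\<bar> ^ (N - m) * B = 0" using mN by simp
        have "((\<lambda>s::real. \<bar>s\<bar> ^ (N - m) * B) \<longlongrightarrow> 0) (at 0)" using L unfolding z .
        from order_tendstoD(2)[OF this eta]
        have ev3: "eventually (\<lambda>s::real. \<bar>s\<bar> ^ (N - m) * B < \<eta>) (at 0)" .
        have "eventually (\<lambda>s. (s \<noteq> 0 \<and> (\<forall>i\<in>{..<Suc N}. \<forall>p\<in>P. p (sv_diff (ys s ! i) (xs ! i)) < \<delta>))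
             \<and> \<bar>s\<bar> ^ (N - m) * B < \<eta>) (at 0)"
          by (intro eventually_conj ev_nonzero ev1 ev3)
        then obtain s where "s \<noteq> 0" "\<forall>i\<in>{..<Suc N}. \<forall>p\<in>P. p (sv_diff (ys s ! i) (xs ! i)) < \<delta>"
          "\<bar>s\<bar> ^ (N - m) * B < \<eta>"
          using eventually_happens'[OF at_neq_bot] by blast
        with bound show ?thesis by fastforce
      qed
      then have "q W \<le> 0"
        by (metis less_irrefl linorder_not_less)
      then show ?thesis using q_nn[OF lcC lcD q, of W] by simp
    qed
    then show "q (sv_diff (sv_diff W sv_zero) sv_zero) = 0" by (simp only: sv_diff_zero)
  qed
  then show ?thesis unfolding W_def sv_diff_zero .
qed

end

context sctx begin

lemma line_deriv_fst:
  assumes line: "\<And>t. sv_add y (sv_scale t h) \<in> V" and h: "h \<in> bar_space n"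
    and hs: "set hs \<subseteq> bar_space n"
  shows "vderiv SC (\<lambda>t. fst (D (sv_add y (sv_scale t h)) (replicate j h @ hs)) I)
                   (\<lambda>t. fst (D (sv_add y (sv_scale t h)) (replicate (Suc j) h @ hs)) I)"
  unfolding vderiv_def
proof (intro allI ballI impI)
  fix t p and \<epsilon> :: real assume p: "p \<in> SC" and e: "\<epsilon> > 0"
  define z where "z = sv_add y (sv_scale t h)"
  define ks where "ks = replicate j h @ hs"
  have ks: "set ks \<subseteq> bar_space n" unfolding ks_def using hs h by auto
  have L: "sv_lim0 SC SD (diff_quot (\<lambda>y. D y ks) z h) (D z (h # ks))"
    by (rule D_lim[OF _ h ks]) (unfold z_def, rule line)
  have q: "(\<lambda>x. p (fst x I)) \<in> sv_seminorms SC SD" using p unfolding sv_seminorms_def by blast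
  have "\<exists>\<delta>>0. \<forall>\<tau>. \<tau> \<noteq> 0 \<and> \<bar>\<tau>\<bar> < \<delta> \<longrightarrow>
     (\<lambda>x. p (fst x I)) (sv_diff (diff_quot (\<lambda>y. D y ks) z h \<tau>) (D z (h # ks))) < \<epsilon>"
    using L[unfolded sv_lim0_def, THEN bspec, OF q, THEN spec, THEN mp, OF e] .
  then obtain \<delta> where \<delta>: "\<delta> > 0" "\<forall>\<tau>. \<tau> \<noteq> 0 \<and> \<bar>\<tau>\<bar> < \<delta> \<longrightarrow>
     p (fst (sv_diff (diff_quot (\<lambda>y. D y ks) z h \<tau>) (D z (h # ks))) I) < \<epsilon>"
    by (elim exE conjE) (rule that, assumption+)
  have hk: "h # (replicate j h @ hs) = replicate (Suc j) h @ hs" by simp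
  have eq: "fst (sv_diff (diff_quot (\<lambda>y. D y ks) z h \<tau>) (D z (h # ks))) I =
     (1/\<tau>) *\<^sub>R (fst (D (sv_add y (sv_scale (t + \<tau>) h)) ks) I - fst (D z ks) I) - fst (D z (h # ks)) I" for \<tau>
    unfolding diff_quot_def z_def sv_line_shift by (simp only: sv_diff_def sv_scale_def fst_conv snd_conv)
  show "\<exists>\<delta>>0. \<forall>\<tau>. \<tau> \<noteq> 0 \<and> \<bar>\<tau>\<bar> < \<delta> \<longrightarrow>
      p ((1/\<tau>) *\<^sub>R (fst (D (sv_add y (sv_scale (t + \<tau>) h)) (replicate j h @ hs)) I
                   - fst (D (sv_add y (sv_scale t h)) (replicate j h @ hs)) I)
         - fst (D (sv_add y (sv_scale t h)) (replicate (Suc j) h @ hs)) I) < \<epsilon>"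
  proof (intro exI[of _ \<delta>] conjI allI impI \<delta>(1))
    fix \<tau> :: real assume \<tau>: "\<tau> \<noteq> 0 \<and> \<bar>\<tau>\<bar> < \<delta>"
    have "p (fst (sv_diff (diff_quot (\<lambda>y. D y ks) z h \<tau>) (D z (h # ks))) I) < \<epsilon>"
      using \<delta>(2) \<tau> by blast
    then show "p ((1/\<tau>) *\<^sub>R (fst (D (sv_add y (sv_scale (t + \<tau>) h)) (replicate j h @ hs)) I
                   - fst (D (sv_add y (sv_scale t h)) (replicate j h @ hs)) I)
         - fst (D (sv_add y (sv_scale t h)) (replicate (Suc j) h @ hs)) I) < \<epsilon>"
      unfolding eq[of \<tau>] unfolding z_def ks_def hk .
  qed
qed

lemma line_deriv_snd:
  assumes line: "\<And>t. sv_add y (sv_scale t h) \<in> V" and h: "h \<in> bar_space n"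
    and hs: "set hs \<subseteq> bar_space n"
  shows "vderiv SD (\<lambda>t. snd (D (sv_add y (sv_scale t h)) (replicate j h @ hs)) I)
                   (\<lambda>t. snd (D (sv_add y (sv_scale t h)) (replicate (Suc j) h @ hs)) I)"
  unfolding vderiv_def
proof (intro allI ballI impI)
  fix t p and \<epsilon> :: real assume p: "p \<in> SD" and e: "\<epsilon> > 0"
  define z where "z = sv_add y (sv_scale t h)"
  define ks where "ks = replicate j h @ hs"
  have ks: "set ks \<subseteq> bar_space n" unfolding ks_def using hs h by auto
  have L: "sv_lim0 SC SD (diff_quot (\<lambda>y. D y ks) z h) (D z (h # ks))"
    by (rule D_lim[OF _ h ks]) (unfold z_def, rule line)
  have q: "(\<lambda>x. p (snd x I)) \<in> sv_seminorms SC SD" using p unfolding sv_seminorms_def by blast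
  have "\<exists>\<delta>>0. \<forall>\<tau>. \<tau> \<noteq> 0 \<and> \<bar>\<tau>\<bar> < \<delta> \<longrightarrow>
     (\<lambda>x. p (snd x I)) (sv_diff (diff_quot (\<lambda>y. D y ks) z h \<tau>) (D z (h # ks))) < \<epsilon>"
    using L[unfolded sv_lim0_def, THEN bspec, OF q, THEN spec, THEN mp, OF e] .
  then obtain \<delta> where \<delta>: "\<delta> > 0" "\<forall>\<tau>. \<tau> \<noteq> 0 \<and> \<bar>\<tau>\<bar> < \<delta> \<longrightarrow>
     p (snd (sv_diff (diff_quot (\<lambda>y. D y ks) z h \<tau>) (D z (h # ks))) I) < \<epsilon>"
    by (elim exE conjE) (rule that, assumption+)
  have hk: "h # (replicate j h @ hs) = replicate (Suc j) h @ hs" by simp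
  have eq: "snd (sv_diff (diff_quot (\<lambda>y. D y ks) z h \<tau>) (D z (h # ks))) I =
     (1/\<tau>) *\<^sub>R (snd (D (sv_add y (sv_scale (t + \<tau>) h)) ks) I - snd (D z ks) I) - snd (D z (h # ks)) I" for \<tau>
    unfolding diff_quot_def z_def sv_line_shift by (simp only: sv_diff_def sv_scale_def fst_conv snd_conv)
  show "\<exists>\<delta>>0. \<forall>\<tau>. \<tau> \<noteq> 0 \<and> \<bar>\<tau>\<bar> < \<delta> \<longrightarrow>
      p ((1/\<tau>) *\<^sub>R (snd (D (sv_add y (sv_scale (t + \<tau>) h)) (replicate j h @ hs)) I
                   - snd (D (sv_add y (sv_scale t h)) (replicate j h @ hs)) I)
         - snd (D (sv_add y (sv_scale t h)) (replicate (Suc j) h @ hs)) I) < \<epsilon>"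
  proof (intro exI[of _ \<delta>] conjI allI impI \<delta>(1))
    fix \<tau> :: real assume \<tau>: "\<tau> \<noteq> 0 \<and> \<bar>\<tau>\<bar> < \<delta>"
    have "p (snd (sv_diff (diff_quot (\<lambda>y. D y ks) z h \<tau>) (D z (h # ks))) I) < \<epsilon>"
      using \<delta>(2) \<tau> by blast
    then show "p ((1/\<tau>) *\<^sub>R (snd (D (sv_add y (sv_scale (t + \<tau>) h)) (replicate j h @ hs)) I
                   - snd (D (sv_add y (sv_scale t h)) (replicate j h @ hs)) I)
         - snd (D (sv_add y (sv_scale t h)) (replicate (Suc j) h @ hs)) I) < \<epsilon>"
      unfolding eq[of \<tau>] unfolding z_def ks_def hk .
  qed
qed

lemma line_taylor:
  assumes line: "\<And>t. sv_add y (sv_scale t h) \<in> V" and h: "h \<in> bar_space n" and h0: "fst h {} = 0"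
    and hs: "set hs \<subseteq> bar_space n" and nil: "\<forall>k\<in>set hs. fst k {} = 0"
  shows "D (sv_add y h) hs = sv_sum (\<lambda>j. sv_scale (1 / fact j) (D y (replicate j h @ hs))) {..<Suc n}"
proof -
  have van: "D (sv_add y (sv_scale t h)) (replicate (Suc n) h @ hs) = sv_zero" for t
    by (rule vanish[OF line]) (use h hs h0 nil in auto)
  have y1: "sv_add y (sv_scale 1 h) = sv_add y h" by (simp only: sv_scale_1)
  have y0: "sv_add y (sv_scale 0 h) = y" by (rule sv_add_0)
  show ?thesis
  proof (rule sv_eqI)
    fix I
    define c where "c j t = fst (D (sv_add y (sv_scale t h)) (replicate j h @ hs)) I" for j t
    have "c 0 1 = (\<Sum>j<Suc n. (1 ^ j / fact j) *\<^sub>R c j 0)"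
    proof (rule vtaylor_gen[OF lcC])
      show "\<forall>j<Suc n. vderiv SC (c j) (c (Suc j))"
        unfolding c_def using line_deriv_fst[OF line h hs] by blast
      show "\<forall>t. c (Suc n) t = 0" unfolding c_def van by (simp add: sv_zero_def del: diff_iter.simps)
    qed
    then show "fst (D (sv_add y h) hs) I = fst (sv_sum (\<lambda>j. sv_scale (1 / fact j) (D y (replicate j h @ hs))) {..<Suc n}) I"
      unfolding c_def y1 y0 by (simp add: sv_sum_def sv_scale_def del: diff_iter.simps)
  next
    fix I
    define c where "c j t = snd (D (sv_add y (sv_scale t h)) (replicate j h @ hs)) I" for j t
    have "c 0 1 = (\<Sum>j<Suc n. (1 ^ j / fact j) *\<^sub>R c j 0)"
    proof (rule vtaylor_gen[OF lcD])
      show "\<forall>j<Suc n. vderiv SD (c j) (c (Suc j))"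
        unfolding c_def using line_deriv_snd[OF line h hs] by blast
      show "\<forall>t. c (Suc n) t = 0" unfolding c_def van by (simp add: sv_zero_def del: diff_iter.simps)
    qed
    then show "snd (D (sv_add y h) hs) I = snd (sv_sum (\<lambda>j. sv_scale (1 / fact j) (D y (replicate j h @ hs))) {..<Suc n}) I"
      unfolding c_def y1 y0 by (simp add: sv_sum_def sv_scale_def del: diff_iter.simps)
  qed
qed

end

definition rho :: "real \<Rightarrow> grass \<Rightarrow> grass" where
  "rho s a = (\<lambda>I. s ^ card I * a I)"

lemma rho_gmult: "rho s (gmult a b) = gmult (rho s a) (rho s b)"
proof
  fix K
  show "rho s (gmult a b) K = gmult (rho s a) (rho s b) K"
  proof (cases "finite K")
    case True
    have eq: "s ^ card K * (gsign I (K - I) * a I * b (K - I))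
        = gsign I (K - I) * (s ^ card I * a I) * (s ^ card (K - I) * b (K - I))" if I: "I \<in> Pow K" for I
    proof -
      have "I \<subseteq> K" using I by simp
      then have "card K = card I + card (K - I)"
        using True by (metis card_Diff_subset finite_subset le_add_diff_inverse card_mono)
      then have "s ^ card K = s ^ card I * s ^ card (K - I)" by (simp add: power_add)
      then show ?thesis by (simp add: algebra_simps)
    qed
    have "rho s (gmult a b) K = (\<Sum>I\<in>Pow K. s ^ card K * (gsign I (K - I) * a I * b (K - I)))"
      unfolding rho_def gmult_def by (simp add: sum_distrib_left)
    also have "\<dots> = (\<Sum>I\<in>Pow K. gsign I (K - I) * (s ^ card I * a I) * (s ^ card (K - I) * b (K - I)))"
      by (rule sum.cong[OF refl]) (rule eq)
    also have "\<dots> = gmult (rho s a) (rho s b) K" unfolding rho_def gmult_def ..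
    finally show ?thesis .
  next
    case False
    then have "infinite (Pow K)" by simp
    then show ?thesis unfolding rho_def gmult_def by simp
  qed
qed

lemma rho_hom: "gr_hom n n (rho s)"
  unfolding gr_hom_def
proof (intro conjI ballI)
  fix a assume "a \<in> grass n"
  then show "rho s a \<in> grass n" unfolding grass_def rho_def by auto
next
  fix a b :: grass
  show "rho s (\<lambda>I. a I + b I) = (\<lambda>I. rho s a I + rho s b I)" unfolding rho_def by (simp add: algebra_simps)
next
  show "\<forall>c. \<forall>a\<in>grass n. rho s (\<lambda>I. c * a I) = (\<lambda>I. c * rho s a I)"
    unfolding rho_def by (simp add: algebra_simps)
next
  show "rho s (gbasis {}) = gbasis {}" unfolding rho_def gbasis_def by auto
next
  fix a b :: grass
  show "rho s (gmult a b) = gmult (rho s a) (rho s b)" by (rule rho_gmult)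
next
  show "rho s ` gr_even n \<subseteq> gr_even n" unfolding gr_even_def grass_def rho_def by auto
next
  show "rho s ` gr_odd n \<subseteq> gr_odd n" unfolding gr_odd_def grass_def rho_def by auto
qed

lemma bar_map_rho: "bar_map n (rho s) z = sv_cmul (dsc n s) z"
proof (rule sv_eqI)
  fix J
  have fin: "finite (Pow {..<n})" by simp
  have "(\<Sum>I\<in>Pow {..<n}. rho s (gbasis I) J *\<^sub>R fst z I) = (\<Sum>I\<in>Pow {..<n}. if I = J then s ^ card J *\<^sub>R fst z J else 0)"
    by (intro sum.cong refl) (auto simp: rho_def gbasis_def)
  also have "\<dots> = (if J \<in> Pow {..<n} then s ^ card J *\<^sub>R fst z J else 0)"
    by (rule sum.delta[OF fin])
  finally show "fst (bar_map n (rho s) z) J = fst (sv_cmul (dsc n s) z) J"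
    unfolding bar_map_def sv_cmul_def dsc_def by simp
next
  fix J
  have fin: "finite (Pow {..<n})" by simp
  have "(\<Sum>I\<in>Pow {..<n}. rho s (gbasis I) J *\<^sub>R snd z I) = (\<Sum>I\<in>Pow {..<n}. if I = J then s ^ card J *\<^sub>R snd z J else 0)"
    by (intro sum.cong refl) (auto simp: rho_def gbasis_def)
  also have "\<dots> = (if J \<in> Pow {..<n} then s ^ card J *\<^sub>R snd z J else 0)"
    by (rule sum.delta[OF fin])
  finally show "snd (bar_map n (rho s) z) J = snd (sv_cmul (dsc n s) z) J"
    unfolding bar_map_def sv_cmul_def dsc_def by simp
qed

lemma id_hom: "gr_hom 0 n id"
  unfolding gr_hom_def grass_def gr_even_def gr_odd_def gbasis_def by auto

lemma bar0_fst: "x \<in> bar_space 0 \<Longrightarrow> J \<noteq> {} \<Longrightarrow> fst x J = 0"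
  unfolding bar_space_def by auto

lemma bar0_snd: "x \<in> bar_space 0 \<Longrightarrow> snd x J = 0"
  unfolding bar_space_def by fastforce

lemma bar_map_id0: "x \<in> bar_space 0 \<Longrightarrow> bar_map 0 id x = x"
proof (rule sv_eqI)
  fix J assume x: "x \<in> bar_space 0"
  have P: "Pow {..<0::nat} = {{}}" by auto
  show "fst (bar_map 0 id x) J = fst x J"
    unfolding bar_map_def P using bar0_fst[OF x, of J] by (simp add: gbasis_def)
  show "snd (bar_map 0 id x) J = snd x J"
    unfolding bar_map_def P using bar0_snd[OF x] by (simp add: gbasis_def)
qed

lemma bar0_in: "x \<in> bar_space 0 \<Longrightarrow> x \<in> bar_space n"
  unfolding bar_space_def by auto

lemma dsc_x: "x \<in> bar_space 0 \<Longrightarrow> sv_cmul (dsc n c) x = x"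
proof (rule sv_eqI)
  fix J assume x: "x \<in> bar_space 0"
  show "fst (sv_cmul (dsc n c) x) J = fst x J"
    using bar0_fst[OF x, of J] by (cases "J = {}") (auto simp: sv_cmul_def dsc_def)
  show "snd (sv_cmul (dsc n c) x) J = snd x J"
    using bar0_snd[OF x] by (simp add: sv_cmul_def)
qed

lemma dsc_inv: "s \<noteq> 0 \<Longrightarrow> (\<lambda>I. dsc n (1/s) I * dsc n s I) = dsc n 1"
  by (rule ext) (simp add: dsc_def power_mult_distrib[symmetric])

lemma sv_diff_add_left: "sv_diff (sv_add x w) x = w"
  by (rule sv_eqI) (auto simp: sv_diff_def sv_add_def)

lemma sv_scale_zero: "sv_scale c sv_zero = sv_zero"
  by (rule sv_eqI) (auto simp: sv_scale_def sv_zero_def)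

lemma sv_sum_mono_neutral:
  assumes "finite B" "A \<subseteq> B" "\<And>i. i \<in> B - A \<Longrightarrow> g i = sv_zero"
  shows "sv_sum g A = sv_sum g B"
  unfolding sv_sum_def using assms
  by (intro sv_eqI) (simp_all, (rule sum.mono_neutral_left; auto simp: sv_zero_def)+)

theorem mainTheorem5:
  fixes k :: enat
    and SA :: "('a::real_vector \<Rightarrow> real) set" and SB :: "('b::real_vector \<Rightarrow> real) set"
    and SC :: "('c::real_vector \<Rightarrow> real) set" and SD :: "('d::real_vector \<Rightarrow> real) set"
    and U :: "nat \<Rightarrow> ('a, 'b) sv set"
    and f :: "nat \<Rightarrow> ('a, 'b) sv \<Rightarrow> ('c, 'd) sv"
    and n :: nat and x n0 n1 :: "('a, 'b) sv"
  assumes "lc_space SA" and "lc_space SB" and "lc_space SC" and "lc_space SD"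
    and "open_subfunctor k SA SB U"
    and "nat_transf k U f"
    and "\<forall>m. enat m \<le> k \<longrightarrow> bastiani_smooth SA SB SC SD m (U m) (f m)"
    and "enat n \<le> k"
    and "x \<in> U 0"
    and "n0 \<in> even_plus_part n"
    and "n1 \<in> odd_part n"
  shows "sv_add (sv_add x n0) n1 \<in> U n
    \<and> finite {(m, l). sv_scale (1 / (fact m * fact l))
                (diff_iter SC SD (f n) x (replicate m n0 @ replicate l n1)) \<noteq> sv_zero}
    \<and> f n (sv_add (sv_add x n0) n1) =
        sv_sum (\<lambda>(m, l). sv_scale (1 / (fact m * fact l))
                (diff_iter SC SD (f n) x (replicate m n0 @ replicate l n1)))
          {(m, l). sv_scale (1 / (fact m * fact l))
                (diff_iter SC SD (f n) x (replicate m n0 @ replicate l n1)) \<noteq> sv_zero}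
    \<and> finite {i. sv_scale (1 / fact i) (diff_iter SC SD (f n) x (replicate i (sv_add n0 n1))) \<noteq> sv_zero}
    \<and> f n (sv_add (sv_add x n0) n1) =
        sv_sum (\<lambda>i. sv_scale (1 / fact i) (diff_iter SC SD (f n) x (replicate i (sv_add n0 n1))))
          {i. sv_scale (1 / fact i) (diff_iter SC SD (f n) x (replicate i (sv_add n0 n1))) \<noteq> sv_zero}"
proof -
  note lcA = assms(1) and lcB = assms(2) and lcC = assms(3) and lcD = assms(4)
    and osub = assms(5) and nt = assms(6) and smo = assms(7) and kn = assms(8) and xU0 = assms(9)
    and n0P = assms(10) and n1P = assms(11)
  have k0: "enat 0 \<le> k" by (simp add: zero_enat_def[symmetric])
  have osub1: "\<And>m. enat m \<le> k \<Longrightarrow> sv_open SA SB m (U m)"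
    using osub unfolding open_subfunctor_def by blast
  have osub2: "\<And>m m' \<rho>. enat m \<le> k \<Longrightarrow> enat m' \<le> k \<Longrightarrow> gr_hom m m' \<rho> \<Longrightarrow> bar_map m \<rho> ` U m \<subseteq> U m'"
    using osub unfolding open_subfunctor_def by blast
  have nt2: "\<And>y s. y \<in> U n \<Longrightarrow> bar_map n (rho s) (f n y) = f n (bar_map n (rho s) y)"
    using nt kn rho_hom unfolding nat_transf_def by blast
  have smn: "bastiani_smooth SA SB SC SD n (U n) (f n)" using smo kn by blast
  have clV: "\<And>y s. y \<in> U n \<Longrightarrow> sv_cmul (dsc n s) y \<in> U n"
  proof -
    fix y s assume y: "y \<in> U n"
    have "bar_map n (rho s) y \<in> U n" using osub2[OF kn kn rho_hom] y by blast
    then show "sv_cmul (dsc n s) y \<in> U n" by (simp only: bar_map_rho)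
  qed
  have natF: "\<And>y s. y \<in> U n \<Longrightarrow> f n (sv_cmul (dsc n s) y) = sv_cmul (dsc n s) (f n y)"
    using nt2 by (simp only: bar_map_rho)
  interpret sctx SA SB SC SD n "U n" "f n"
    by (unfold_locales) (rule lcA, rule lcB, rule lcC, rule lcD, rule smn, erule natF, erule clV)
  have x0: "x \<in> bar_space 0" using osub1[OF k0] xU0 unfolding sv_open_def by blast
  have xU: "x \<in> U n"
  proof -
    have "bar_map 0 id x \<in> U n" using osub2[OF k0 kn id_hom] xU0 by blast
    then show ?thesis by (simp only: bar_map_id0[OF x0])
  qed
  have n0b: "n0 \<in> bar_space n" and n00: "fst n0 {} = 0" using n0P unfolding even_plus_part_def by auto
  have n1b: "n1 \<in> bar_space n" and n10: "fst n1 {} = 0" using n1P unfolding odd_part_def by auto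
  have plane: "sv_add (sv_add x (sv_scale a n0)) (sv_scale b n1) \<in> U n" for a b
  proof -
    define h where "h = sv_add (sv_scale a n0) (sv_scale b n1)"
    have hb: "h \<in> bar_space n" unfolding h_def by (intro bar_add bar_scale n0b n1b)
    have h0: "fst h {} = 0" unfolding h_def using n00 n10 by (simp add: sv_add_def sv_scale_def)
    obtain P \<epsilon> where P: "finite P" "P \<subseteq> sv_seminorms SA SB" "\<epsilon> > 0"
      "{z \<in> bar_space n. \<forall>p\<in>P. p (sv_diff z x) < \<epsilon>} \<subseteq> U n"
    proof -
      have "\<exists>P \<epsilon>. finite P \<and> P \<subseteq> sv_seminorms SA SB \<and> \<epsilon> > 0 \<and>
          {z \<in> bar_space n. \<forall>p\<in>P. p (sv_diff z x) < \<epsilon>} \<subseteq> U n"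
        using sm_open xU unfolding sv_open_def by (elim conjE) (erule bspec)
      then show ?thesis using that by blast
    qed
    have T0h: "sv_cmul (dsc n 0) h = sv_zero"
      unfolding T_T'[OF hb h0] by (rule sv_eqI) (simp_all add: sv_scale_def sv_zero_def)
    have ev: "eventually (\<lambda>s. \<forall>p\<in>P. p (sv_diff (sv_add x (sv_cmul (dsc n s) h)) x) < \<epsilon>) (at 0)"
    proof (intro eventually_ball_finite[OF P(1)] ballI)
      fix p assume p: "p \<in> P"
      have pp: "p \<in> sv_seminorms SA SB" using p P(2) by blast
      show "eventually (\<lambda>s. p (sv_diff (sv_add x (sv_cmul (dsc n s) h)) x) < \<epsilon>) (at 0)"
      proof -
        have "eventually (\<lambda>s. p (sv_diff (sv_cmul (dsc n s) h) (sv_cmul (dsc n 0) h)) < \<epsilon>) (at 0)"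
          by (rule ev_cmul[OF lcA lcB pp _ P(3)]) (rule dsc_tendsto)
        then show ?thesis unfolding T0h sv_diff_zero sv_diff_add_left .
      qed
    qed
    obtain s where s: "s \<noteq> 0" "\<forall>p\<in>P. p (sv_diff (sv_add x (sv_cmul (dsc n s) h)) x) < \<epsilon>"
      using eventually_happens'[OF at_neq_bot eventually_conj[OF ev_nonzero ev]] by blast
    define z where "z = sv_add x (sv_cmul (dsc n s) h)"
    have zb: "z \<in> bar_space n" unfolding z_def by (intro bar_add bar_cmul hb bar0_in[OF x0])
    have zU: "z \<in> U n" using P(4) zb s(2) unfolding z_def by blast
    have "sv_cmul (dsc n (1/s)) z = sv_add x h"
      unfolding z_def sv_add_cmul dsc_x[OF x0] sv_cmul_cmul dsc_inv[OF s(1)] T1_id[OF hb] ..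
    moreover have "sv_add x h = sv_add (sv_add x (sv_scale a n0)) (sv_scale b n1)"
      unfolding h_def by (rule sv_eqI) (simp_all add: sv_add_def add.assoc)
    ultimately show ?thesis using clV[OF zU, of "1/s"] by simp
  qed
  define Y where "Y = sv_add (sv_add x n0) n1"
  have YU: "Y \<in> U n" using plane[of 1 1] unfolding Y_def sv_scale_1 .
  have setrep: "set (replicate m n0 @ replicate l n1) \<subseteq> bar_space n" for m l using n0b n1b by auto
  have nilrep: "\<forall>h\<in>set (replicate m n0 @ replicate l n1). fst h {} = 0" for m l using n00 n10 by auto
  define E where "E = (\<lambda>m l. sv_scale (1 / (fact m * fact l)) (D x (replicate m n0 @ replicate l n1)))"
  have Eapp: "E m l = sv_scale (1 / (fact m * fact l)) (D x (replicate m n0 @ replicate l n1))" for m l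
    unfolding E_def ..
  have Ez: "E m l = sv_zero" if "n < m + l" for m l
  proof -
    have "D x (replicate m n0 @ replicate l n1) = sv_zero"
      by (rule vanish[OF xU setrep nilrep]) (use that in simp)
    then show ?thesis unfolding Eapp by (simp only: sv_scale_zero)
  qed
  define S2 where "S2 = {(m, l). E m l \<noteq> sv_zero}"
  define Q where "Q = {..<Suc n} \<times> {..<Suc n}"
  have S2Q: "S2 \<subseteq> Q"
  proof
    fix p assume "p \<in> S2"
    then obtain m l where p: "p = (m, l)" "E m l \<noteq> sv_zero" unfolding S2_def by auto
    then have "m + l \<le> n" using Ez by (meson not_le)
    then show "p \<in> Q" unfolding Q_def p by auto
  qed
  have finS2: "finite S2" using S2Q finite_subset unfolding Q_def by blast
  have sumS2: "sv_sum (\<lambda>(m, l). E m l) S2 = sv_sum (\<lambda>(m, l). E m l) Q"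
    by (rule sv_sum_mono_neutral) (use S2Q in \<open>auto simp: Q_def S2_def\<close>)
  have line1: "\<And>t. sv_add (sv_add x n0) (sv_scale t n1) \<in> U n" using plane[of 1] unfolding sv_scale_1 .
  have line2: "\<And>t. sv_add x (sv_scale t n0) \<in> U n" using plane[of _ 0] unfolding sv_add_0 .
  have T1: "f n Y = sv_sum (\<lambda>l. sv_scale (1 / fact l) (D (sv_add x n0) (replicate l n1 @ []))) {..<Suc n}"
    unfolding Y_def using line_taylor[OF line1 n1b n10, of "[]"] by simp
  have T2: "D (sv_add x n0) (replicate l n1) = sv_sum (\<lambda>m. sv_scale (1 / fact m) (D x (replicate m n0 @ replicate l n1))) {..<Suc n}" for l
  proof -
    have a: "set (replicate l n1) \<subseteq> bar_space n" using n1b by (induction l) auto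
    have b: "\<forall>k\<in>set (replicate l n1). fst k {} = 0" using n10 by (induction l) auto
    show ?thesis using line_taylor[OF line2 n0b n00 a b] .
  qed
  have eq2: "f n Y = sv_sum (\<lambda>(m, l). E m l) Q"
  proof (rule sv_eqI)
    fix I
    have "fst (f n Y) I = (\<Sum>l<Suc n. (1 / fact l) *\<^sub>R (\<Sum>m<Suc n. (1 / fact m) *\<^sub>R fst (D x (replicate m n0 @ replicate l n1)) I))"
      unfolding T1 append_Nil2 T2 by (simp only: sv_sum_def sv_scale_def fst_conv)
    also have "\<dots> = (\<Sum>l<Suc n. \<Sum>m<Suc n. (1 / (fact m * fact l)) *\<^sub>R fst (D x (replicate m n0 @ replicate l n1)) I)"
      by (intro sum.cong refl) (simp add: scaleR_sum_right mult.commute del: diff_iter.simps sum.lessThan_Suc lessThan_Suc)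
    also have "\<dots> = (\<Sum>m<Suc n. \<Sum>l<Suc n. (1 / (fact m * fact l)) *\<^sub>R fst (D x (replicate m n0 @ replicate l n1)) I)"
      by (rule sum.swap)
    also have "\<dots> = fst (sv_sum (\<lambda>(m, l). E m l) Q) I"
      unfolding sv_sum_def Q_def fst_conv sum.cartesian_product' by (simp add: Eapp sv_scale_def del: diff_iter.simps)
    finally show "fst (f n Y) I = fst (sv_sum (\<lambda>(m, l). E m l) Q) I" .
  next
    fix I
    have "snd (f n Y) I = (\<Sum>l<Suc n. (1 / fact l) *\<^sub>R (\<Sum>m<Suc n. (1 / fact m) *\<^sub>R snd (D x (replicate m n0 @ replicate l n1)) I))"
      unfolding T1 append_Nil2 T2 by (simp only: sv_sum_def sv_scale_def snd_conv)
    also have "\<dots> = (\<Sum>l<Suc n. \<Sum>m<Suc n. (1 / (fact m * fact l)) *\<^sub>R snd (D x (replicate m n0 @ replicate l n1)) I)"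
      by (intro sum.cong refl) (simp add: scaleR_sum_right mult.commute del: diff_iter.simps sum.lessThan_Suc lessThan_Suc)
    also have "\<dots> = (\<Sum>m<Suc n. \<Sum>l<Suc n. (1 / (fact m * fact l)) *\<^sub>R snd (D x (replicate m n0 @ replicate l n1)) I)"
      by (rule sum.swap)
    also have "\<dots> = snd (sv_sum (\<lambda>(m, l). E m l) Q) I"
      unfolding sv_sum_def Q_def snd_conv sum.cartesian_product' by (simp add: Eapp sv_scale_def del: diff_iter.simps)
    finally show "snd (f n Y) I = snd (sv_sum (\<lambda>(m, l). E m l) Q) I" .
  qed
  define h where "h = sv_add n0 n1"
  have hb: "h \<in> bar_space n" unfolding h_def by (intro bar_add n0b n1b)
  have h0: "fst h {} = 0" unfolding h_def using n00 n10 by (simp add: sv_add_def)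
  define G where "G = (\<lambda>i. sv_scale (1 / fact i) (D x (replicate i h)))"
  have Gz: "G i = sv_zero" if "n < i" for i
  proof -
    have "D x (replicate i h) = sv_zero"
      by (rule vanish[OF xU]) (use that hb h0 in auto)
    then show ?thesis unfolding G_def by (simp only: sv_scale_zero)
  qed
  define S1 where "S1 = {i. G i \<noteq> sv_zero}"
  have S1Q: "S1 \<subseteq> {..<Suc n}" unfolding S1_def using Gz by (auto simp: less_Suc_eq_le) (meson not_le)
  have finS1: "finite S1" using S1Q finite_subset by blast
  have sumS1: "sv_sum G S1 = sv_sum G {..<Suc n}"
    by (rule sv_sum_mono_neutral) (use S1Q in \<open>auto simp: S1_def\<close>)
  have line3: "sv_add x (sv_scale t h) \<in> U n" for t
  proof -
    have "sv_add x (sv_scale t h) = sv_add (sv_add x (sv_scale t n0)) (sv_scale t n1)"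
      unfolding h_def by (rule sv_eqI) (simp_all add: sv_add_def sv_scale_def scaleR_add_right add.assoc)
    then show ?thesis using plane[of t t] by simp
  qed
  have Yh: "Y = sv_add x h" unfolding Y_def h_def by (rule sv_eqI) (simp_all add: sv_add_def add.assoc)
  have eq1: "f n Y = sv_sum G {..<Suc n}"
    unfolding Yh G_def using line_taylor[OF line3 hb h0, of "[]"] by simp
  have final: "Y \<in> U n \<and> finite S2 \<and> f n Y = sv_sum (\<lambda>(m, l). E m l) S2 \<and> finite S1 \<and> f n Y = sv_sum G S1"
    using YU finS2 eq2 sumS2 finS1 eq1 sumS1 by simp
  then show ?thesis unfolding Y_def S2_def S1_def E_def G_def h_def .
qed

end
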